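(* Let $R$ be a commutative integral domain with identity, $\Gamma$ a discrete group with identity $e$, and $(\mathcal{G},c)\in\mathcal{C}_{R,\Gamma}$. Let $g\in\Gamma$ and $(m,n)\in N_R(\mathcal{G})_g$. Then: (1) $mn=1_{s(\operatorname{supp}(n))}$ and $nm=1_{s(\operatorname{supp}(m))}$; (2) $\operatorname{supp}(m)$ is a compact open bisection contained in $c^{-1}(g)$; (3) $\operatorname{supp}(n)=\operatorname{supp}(m)^{-1}$.
   Context: An ample Hausdorff groupoid is a Hausdorff topological groupoid whose range and source maps $r,s$ are local homeomorphisms and whose unit space $\mathcal{G}^0$ has a basis of compact open sets; a bisection is a subset on which $r$ and $s$ restrict to homeomorphisms onto open subsets of $\mathcal{G}^0$; $\mathcal{G}_x^x=\{\eta:s(\eta)=r(\eta)=x\}$. A continuous cocycle is a continuous groupoid homomorphism $c:\mathcal{G}\to\Gamma$. $A_R(\mathcal{G})$ is the Steinberg algebra: locally constant compactly supported functions $\mathcal{G}\to R$, pointwise addition, convolution $(f*g)(\eta)=\sum_{\alpha\beta=\eta}f(\alpha)g(\beta)$; $D_R(\mathcal{G})$ is the subalgebra of functions supported in $\mathcal{G}^0$; $\operatorname{supp}(f)=\{\eta:f(\eta)\ne0\}$; $1_U$ is the indicator function of $U$; $A_R(\mathcal{G})_g=\{f:\operatorname{supp}(f)\subseteq c^{-1}(g)\}$. $\mathcal{C}_{R,\Gamma}$ is the class of pairs $(\mathcal{G},c)$ with $\mathcal{G}$ an ample Hausdorff groupoid and $c:\mathcal{G}\to\Gamma$ a continuous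 cocycle such that there is a dense $X\subseteq\mathcal{G}^0$ with the group ring $R(c^{-1}(e)\cap\mathcal{G}_x^x)$ having no zero-divisors and only trivial units (every invertible element is of the form $uh$, $u\in R$, $h$ in the group) for all $x\in X$. A normaliser of $D_R(\mathcal{G})$ is a pair $(m,n)\in A_R(\mathcal{G})\times A_R(\mathcal{G})$ with $mD_R(\mathcal{G})n\cup nD_R(\mathcal{G})m\subseteq D_R(\mathcal{G})$, $mnm=m$ and $nmn=n$; $N_R(\mathcal{G})$ is the set of normalisers and $N_R(\mathcal{G})_g=N_R(\mathcal{G})\cap(A_R(\mathcal{G})_g\times A_R(\mathcal{G})_{g^{-1}})$. *)

theory Defs
  imports "HOL-Analysis.Analysis" "HOL-Algebra.Group"
begin

text \<open>The composition
  gcmp a b is the product a b, defined when gsrc a = grng b.\<close>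

record 'g top_groupoid =
  gtop :: "'g topology"
  gsrc :: "'g \<Rightarrow> 'g"
  grng :: "'g \<Rightarrow> 'g"
  gcmp :: "'g \<Rightarrow> 'g \<Rightarrow> 'g"
  ginv :: "'g \<Rightarrow> 'g"

definition arrows :: "'g top_groupoid \<Rightarrow> 'g set" where
  "arrows G = topspace (gtop G)"

definition units :: "'g top_groupoid \<Rightarrow> 'g set" where
  "units G = grng G ` arrows G"

definition composable :: "'g top_groupoid \<Rightarrow> ('g \<times> 'g) set" where
  "composable G = {(a, b). a \<in> arrows G \<and> b \<in> arrows G \<and> gsrc G a = grng G b}"

definition is_groupoid :: "'g top_groupoid \<Rightarrow> bool" where
  "is_groupoid G \<longleftrightarrow>
     (\<forall>a\<in>arrows G. gsrc G a \<in> arrows G \<and> grng G a \<in> arrows G \<and> ginv G a \<in> arrows G) \<and>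
     (\<forall>a\<in>arrows G. gsrc G (gsrc G a) = gsrc G a \<and> grng G (gsrc G a) = gsrc G a \<and>
                    gsrc G (grng G a) = grng G a \<and> grng G (grng G a) = grng G a) \<and>
     (\<forall>(a, b)\<in>composable G. gcmp G a b \<in> arrows G \<and>
                    gsrc G (gcmp G a b) = gsrc G b \<and> grng G (gcmp G a b) = grng G a) \<and>
     (\<forall>a\<in>arrows G. \<forall>b\<in>arrows G. \<forall>c\<in>arrows G.
        gsrc G a = grng G b \<longrightarrow> gsrc G b = grng G c \<longrightarrow>
        gcmp G (gcmp G a b) c = gcmp G a (gcmp G b c)) \<and>
     (\<forall>a\<in>arrows G. gcmp G (grng G a) a = a \<and> gcmp G a (gsrc G a) = a) \<and>
     (\<forall>a\<in>arrows G. gsrc G (ginv G a) = grng G a \<and> grng G (ginv G a) = gsrc G a \<and>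
                    gcmp G a (ginv G a) = grng G a \<and> gcmp G (ginv G a) a = gsrc G a)"

definition is_topological_groupoid :: "'g top_groupoid \<Rightarrow> bool" where
  "is_topological_groupoid G \<longleftrightarrow> is_groupoid G \<and>
     continuous_map (gtop G) (gtop G) (ginv G) \<and>
     continuous_map (subtopology (prod_topology (gtop G) (gtop G)) (composable G)) (gtop G)
       (\<lambda>(a, b). gcmp G a b)"

definition local_homeomorphism :: "'a topology \<Rightarrow> 'b topology \<Rightarrow> ('a \<Rightarrow> 'b) \<Rightarrow> bool" where
  "local_homeomorphism T S f \<longleftrightarrow> f ` topspace T \<subseteq> topspace S \<and>
     (\<forall>x\<in>topspace T. \<exists>U. openin T U \<and> x \<in> U \<and> openin S (f ` U) \<and>
        homeomorphic_map (subtopology T U) (subtopology S (f ` U)) f)"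

definition unit_top :: "'g top_groupoid \<Rightarrow> 'g topology" where
  "unit_top G = subtopology (gtop G) (units G)"

definition ample_hausdorff_groupoid :: "'g top_groupoid \<Rightarrow> bool" where
  "ample_hausdorff_groupoid G \<longleftrightarrow>
     is_topological_groupoid G \<and> Hausdorff_space (gtop G) \<and>
     local_homeomorphism (gtop G) (unit_top G) (grng G) \<and>
     local_homeomorphism (gtop G) (unit_top G) (gsrc G) \<and>
     (\<forall>U x. openin (unit_top G) U \<and> x \<in> U \<longrightarrow>
        (\<exists>K. openin (unit_top G) K \<and> compactin (unit_top G) K \<and> x \<in> K \<and> K \<subseteq> U))"

definition bisection :: "'g top_groupoid \<Rightarrow> 'g set \<Rightarrow> bool" where
  "bisection G B \<longleftrightarrow> B \<subseteq> arrows G \<and>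
     openin (unit_top G) (grng G ` B) \<and>
     homeomorphic_map (subtopology (gtop G) B) (subtopology (unit_top G) (grng G ` B)) (grng G) \<and>
     openin (unit_top G) (gsrc G ` B) \<and>
     homeomorphic_map (subtopology (gtop G) B) (subtopology (unit_top G) (gsrc G ` B)) (gsrc G)"

definition isotropy :: "'g top_groupoid \<Rightarrow> 'g \<Rightarrow> 'g set" where
  "isotropy G x = {\<eta> \<in> arrows G. gsrc G \<eta> = x \<and> grng G \<eta> = x}"

definition continuous_cocycle ::
  "'g top_groupoid \<Rightarrow> ('c, 'm) monoid_scheme \<Rightarrow> ('g \<Rightarrow> 'c) \<Rightarrow> bool" where
  "continuous_cocycle G \<Gamma> c \<longleftrightarrow>
     (\<forall>a\<in>arrows G. c a \<in> carrier \<Gamma>) \<and>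
     (\<forall>(a, b)\<in>composable G. c (gcmp G a b) = c a \<otimes>\<^bsub>\<Gamma>\<^esub> c b) \<and>
     (\<forall>\<gamma>\<in>carrier \<Gamma>. openin (gtop G) {\<eta> \<in> arrows G. c \<eta> = \<gamma>})"

definition supp :: "('g \<Rightarrow> 'a::zero) \<Rightarrow> 'g set" where
  "supp f = {\<eta>. f \<eta> \<noteq> 0}"

text \<open>Convolution (f*g)(eta) = sum over all factorisations alpha beta = eta of f(alpha) g(beta)
  (only the finitely many non-zero terms are summed).\<close>
definition conv :: "'g top_groupoid \<Rightarrow> ('g \<Rightarrow> 'a::comm_ring_1) \<Rightarrow> ('g \<Rightarrow> 'a) \<Rightarrow> 'g \<Rightarrow> 'a" where
  "conv G f h \<eta> = (\<Sum>(\<alpha>, \<beta>) \<in> {(\<alpha>, \<beta>) \<in> composable G. gcmp G \<alpha> \<beta> = \<eta> \<and> f \<alpha> * h \<beta> \<noteq> 0}.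
                      f \<alpha> * h \<beta>)"

definition steinberg :: "'g top_groupoid \<Rightarrow> ('g \<Rightarrow> 'a::comm_ring_1) set" where
  "steinberg G = {f. (\<forall>\<eta>. \<eta> \<notin> arrows G \<longrightarrow> f \<eta> = 0) \<and>
     (\<forall>\<eta>\<in>arrows G. \<exists>U. openin (gtop G) U \<and> \<eta> \<in> U \<and> (\<forall>\<xi>\<in>U. f \<xi> = f \<eta>)) \<and>
     compactin (gtop G) (gtop G closure_of supp f)}"

definition diag_sub :: "'g top_groupoid \<Rightarrow> ('g \<Rightarrow> 'a::comm_ring_1) set" where
  "diag_sub G = {f \<in> steinberg G. supp f \<subseteq> units G}"

definition graded_part ::
  "'g top_groupoid \<Rightarrow> ('g \<Rightarrow> 'c) \<Rightarrow> 'c \<Rightarrow> ('g \<Rightarrow> 'a::comm_ring_1) set" where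
  "graded_part G c g = {f \<in> steinberg G. supp f \<subseteq> {\<eta> \<in> arrows G. c \<eta> = g}}"

definition normalisers :: "'g top_groupoid \<Rightarrow> (('g \<Rightarrow> 'a::comm_ring_1) \<times> ('g \<Rightarrow> 'a)) set" where
  "normalisers G = {(m, n). m \<in> steinberg G \<and> n \<in> steinberg G \<and>
     (\<forall>d\<in>diag_sub G. conv G (conv G m d) n \<in> diag_sub G \<and> conv G (conv G n d) m \<in> diag_sub G) \<and>
     conv G (conv G m n) m = m \<and> conv G (conv G n m) n = n}"

definition graded_normalisers ::
  "'g top_groupoid \<Rightarrow> ('c, 'm) monoid_scheme \<Rightarrow> ('g \<Rightarrow> 'c) \<Rightarrow> 'c \<Rightarrow> (('g \<Rightarrow> 'a::comm_ring_1) \<times> ('g \<Rightarrow> 'a)) set" where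
  "graded_normalisers G \<Gamma> c g =
     normalisers G \<inter> (graded_part G c g \<times> graded_part G c (inv\<^bsub>\<Gamma>\<^esub> g))"

text \<open>The group ring R(H) of a subgroup H of an isotropy group: finitely supported
  R-valued functions with support in H, multiplied by convolution (which on H is the
  group-ring product).  Its identity is the indicator of the unit x.\<close>
definition group_ring :: "'g set \<Rightarrow> ('g \<Rightarrow> 'a::comm_ring_1) set" where
  "group_ring H = {f. finite (supp f) \<and> supp f \<subseteq> H}"

definition group_ring_no_zero_divisors ::
  "'a::comm_ring_1 itself \<Rightarrow> 'g top_groupoid \<Rightarrow> 'g set \<Rightarrow> bool" where
  "group_ring_no_zero_divisors _ G H \<longleftrightarrow>
     (\<forall>a\<in>(group_ring H :: ('g \<Rightarrow> 'a) set). \<forall>b\<in>group_ring H.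
        conv G a b = (\<lambda>_. 0) \<longrightarrow> a = (\<lambda>_. 0) \<or> b = (\<lambda>_. 0))"

definition group_ring_trivial_units ::
  "'a::comm_ring_1 itself \<Rightarrow> 'g top_groupoid \<Rightarrow> 'g \<Rightarrow> 'g set \<Rightarrow> bool" where
  "group_ring_trivial_units _ G x H \<longleftrightarrow>
     (\<forall>a\<in>(group_ring H :: ('g \<Rightarrow> 'a) set).
        (\<exists>b\<in>group_ring H. conv G a b = indicator {x} \<and> conv G b a = indicator {x}) \<longrightarrow>
        (\<exists>u::'a. \<exists>h\<in>H. a = (\<lambda>\<eta>. if \<eta> = h then u else 0)))"

definition class_C ::
  "'a::comm_ring_1 itself \<Rightarrow> ('c, 'm) monoid_scheme \<Rightarrow> 'g top_groupoid \<Rightarrow> ('g \<Rightarrow> 'c) \<Rightarrow> bool" where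
  "class_C R \<Gamma> G c \<longleftrightarrow> ample_hausdorff_groupoid G \<and> continuous_cocycle G \<Gamma> c \<and>
     (\<exists>X \<subseteq> units G. unit_top G closure_of X = units G \<and>
        (\<forall>x\<in>X. group_ring_no_zero_divisors R G {\<eta> \<in> isotropy G x. c \<eta> = \<one>\<^bsub>\<Gamma>\<^esub>} \<and>
                 group_ring_trivial_units R G x {\<eta> \<in> isotropy G x. c \<eta> = \<one>\<^bsub>\<Gamma>\<^esub>}))"

end

theory Submission
  imports Defs
begin
lemma lh_open_image:
  assumes "local_homeomorphism T S f" "openin T U"
  shows "openin S (f ` U)"
proof (subst openin_subopen, intro ballI)
  fix y assume "y \<in> f ` U"
  then obtain x where x: "x \<in> U" "y = f x" by auto
  have "x \<in> topspace T" using x assms(2) openin_subset by blast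
  then obtain W where W: "openin T W" "x \<in> W" "openin S (f ` W)"
     "homeomorphic_map (subtopology T W) (subtopology S (f ` W)) f"
    using assms(1) unfolding local_homeomorphism_def by blast
  have "openin (subtopology T W) (U \<inter> W)"
    using assms(2) by (simp add: openin_subtopology_Int)
  then have "openin (subtopology S (f ` W)) (f ` (U \<inter> W))"
    using W(4) homeomorphic_imp_open_map open_map_def by blast
  then have "openin S (f ` (U \<inter> W))" using W(3) openin_trans_full by blast
  then show "\<exists>T. openin S T \<and> y \<in> T \<and> T \<subseteq> f ` U" using x W(2) by blast
qed

lemma lh_local_inj:
  assumes "local_homeomorphism T S f" "openin T U" "x \<in> U"
  shows "\<exists>W. openin T W \<and> x \<in> W \<and> W \<subseteq> U \<and> inj_on f W"
proof -
  have "x \<in> topspace T" using assms openin_subset by blast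
  then obtain W where W: "openin T W" "x \<in> W" "openin S (f ` W)"
     "homeomorphic_map (subtopology T W) (subtopology S (f ` W)) f"
    using assms(1) unfolding local_homeomorphism_def by blast
  have "inj_on f W" using homeomorphic_imp_injective_map[OF W(4)] W(1)
    by (metis openin_subset topspace_subtopology_subset)
  then show ?thesis using W assms
    by (intro exI[of _ "U \<inter> W"]) (auto intro: inj_on_subset)
qed

lemma lh_continuous:
  assumes "local_homeomorphism T S f"
  shows "continuous_map T S f"
  unfolding continuous_map_def
proof (intro conjI allI impI)
  show "f \<in> topspace T \<rightarrow> topspace S" using assms unfolding local_homeomorphism_def by auto
  fix V assume V: "openin S V"
  show "openin T {x \<in> topspace T. f x \<in> V}"
  proof (subst openin_subopen, intro ballI)
    fix x assume x: "x \<in> {x \<in> topspace T. f x \<in> V}"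
    then obtain W where W: "openin T W" "x \<in> W" "openin S (f ` W)"
       "homeomorphic_map (subtopology T W) (subtopology S (f ` W)) f"
      using assms(1) unfolding local_homeomorphism_def by blast
    have c: "continuous_map (subtopology T W) (subtopology S (f ` W)) f"
      using W(4) homeomorphic_imp_continuous_map by blast
    have "openin (subtopology S (f ` W)) (V \<inter> f ` W)"
      using V by (simp add: openin_subtopology_Int)
    then have "openin (subtopology T W) {y \<in> topspace (subtopology T W). f y \<in> V \<inter> f ` W}"
      using c openin_continuous_map_preimage by blast
    moreover have "{y \<in> topspace (subtopology T W). f y \<in> V \<inter> f ` W} = {y \<in> W. f y \<in> V}"
      using W(1) openin_subset by auto
    ultimately have "openin T {y \<in> W. f y \<in> V}" using W(1) openin_trans_full by metis
    then show "\<exists>U. openin T U \<and> x \<in> U \<and> U \<subseteq> {x \<in> topspace T. f x \<in> V}"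
    proof (intro exI[of _ "{y \<in> W. f y \<in> V}"] conjI)
      show "{y \<in> W. f y \<in> V} \<subseteq> {x \<in> topspace T. f x \<in> V}"
        using W(1) openin_subset by blast
    qed (use x W(2) \<open>openin T {y \<in> W. f y \<in> V}\<close> in auto)
  qed
qed

lemma lh_finite_fibre:
  assumes "local_homeomorphism T S f" "compactin T K"
  shows "finite {x \<in> K. f x = y}"
proof -
  let ?U = "{W. openin T W \<and> inj_on f W}"
  have "K \<subseteq> \<Union>?U"
  proof
    fix x assume "x \<in> K"
    then have "x \<in> topspace T" using assms(2) compactin_subset_topspace by blast
    then obtain W where "openin T W \<and> x \<in> W \<and> W \<subseteq> topspace T \<and> inj_on f W"
      using lh_local_inj[OF assms(1)] by blast
    then show "x \<in> \<Union>?U" by blast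
  qed
  then obtain F where F: "finite F" "F \<subseteq> ?U" "K \<subseteq> \<Union>F"
    using assms(2) unfolding compactin_def by (metis (no_types, lifting) mem_Collect_eq)
  have "{x \<in> K. f x = y} \<subseteq> (\<Union>W\<in>F. {x \<in> W. f x = y})" using F(3) by auto
  moreover have "finite {x \<in> W. f x = y}" if "W \<in> F" for W
  proof -
    have "inj_on f {x \<in> W. f x = y}" using F(2) that by (auto intro: inj_on_subset)
    moreover have "f ` {x \<in> W. f x = y} \<subseteq> {y}" by auto
    ultimately show ?thesis by (metis finite.emptyI finite_insert finite_subset inj_on_finite)
  qed
  ultimately show ?thesis using F(1) by (meson finite_UN_I finite_subset)
qed

locale AG = fixes G :: "'g top_groupoid" assumes ahg: "ample_hausdorff_groupoid G"
begin

abbreviation "Ar \<equiv> arrows G"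
abbreviation "sr \<equiv> gsrc G"
abbreviation "rg \<equiv> grng G"
abbreviation "cm \<equiv> gcmp G"
abbreviation "iv \<equiv> ginv G"
abbreviation "U0 \<equiv> units G"
abbreviation "TG \<equiv> gtop G"
abbreviation "UT \<equiv> unit_top G"

lemma grp: "is_groupoid G" using ahg unfolding ample_hausdorff_groupoid_def is_topological_groupoid_def by blast
lemma haus: "Hausdorff_space TG" using ahg unfolding ample_hausdorff_groupoid_def by blast
lemma lh_r: "local_homeomorphism TG UT rg" using ahg unfolding ample_hausdorff_groupoid_def by blast
lemma lh_s: "local_homeomorphism TG UT sr" using ahg unfolding ample_hausdorff_groupoid_def by blast
lemma inv_cont: "continuous_map TG TG iv" using ahg unfolding ample_hausdorff_groupoid_def is_topological_groupoid_def by blast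
lemma ample: "openin UT U \<Longrightarrow> x \<in> U \<Longrightarrow> \<exists>K. openin UT K \<and> compactin UT K \<and> x \<in> K \<and> K \<subseteq> U"
  using ahg unfolding ample_hausdorff_groupoid_def by blast

lemma Ar_top: "Ar = topspace TG" by (simp add: arrows_def)

lemma closed [simp]: "a \<in> Ar \<Longrightarrow> sr a \<in> Ar" "a \<in> Ar \<Longrightarrow> rg a \<in> Ar" "a \<in> Ar \<Longrightarrow> iv a \<in> Ar"
  using grp unfolding is_groupoid_def by blast+

lemma sr_rg [simp]: "a \<in> Ar \<Longrightarrow> sr (sr a) = sr a" "a \<in> Ar \<Longrightarrow> rg (sr a) = sr a"
  "a \<in> Ar \<Longrightarrow> sr (rg a) = rg a" "a \<in> Ar \<Longrightarrow> rg (rg a) = rg a"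
  using grp unfolding is_groupoid_def by blast+

lemma cm_props: assumes "a \<in> Ar" "b \<in> Ar" "sr a = rg b"
  shows "cm a b \<in> Ar" "sr (cm a b) = sr b" "rg (cm a b) = rg a"
  using grp assms unfolding is_groupoid_def composable_def by auto

lemma assoc: "a \<in> Ar \<Longrightarrow> b \<in> Ar \<Longrightarrow> c \<in> Ar \<Longrightarrow> sr a = rg b \<Longrightarrow> sr b = rg c \<Longrightarrow>
   cm (cm a b) c = cm a (cm b c)"
  using grp unfolding is_groupoid_def by blast

lemma unit_l [simp]: "a \<in> Ar \<Longrightarrow> cm (rg a) a = a" and unit_r [simp]: "a \<in> Ar \<Longrightarrow> cm a (sr a) = a"
  using grp unfolding is_groupoid_def by blast+

lemma iv_props [simp]: "a \<in> Ar \<Longrightarrow> sr (iv a) = rg a" "a \<in> Ar \<Longrightarrow> rg (iv a) = sr a"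
  "a \<in> Ar \<Longrightarrow> cm a (iv a) = rg a" "a \<in> Ar \<Longrightarrow> cm (iv a) a = sr a"
  using grp unfolding is_groupoid_def by blast+

lemma L1: "a \<in> Ar \<Longrightarrow> b \<in> Ar \<Longrightarrow> sr a = rg b \<Longrightarrow> cm (iv a) (cm a b) = b"
  by (metis assoc closed(3) iv_props(1,4) unit_l)
lemma L2: "a \<in> Ar \<Longrightarrow> b \<in> Ar \<Longrightarrow> sr a = rg b \<Longrightarrow> cm (cm a b) (iv b) = a"
  by (metis assoc closed(3) iv_props(2,3) unit_r)
lemma L3: "a \<in> Ar \<Longrightarrow> e \<in> Ar \<Longrightarrow> rg a = rg e \<Longrightarrow> cm a (cm (iv a) e) = e"
  by (metis assoc closed(3) iv_props(1,2,3) unit_l)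
lemma L4: "b \<in> Ar \<Longrightarrow> e \<in> Ar \<Longrightarrow> sr b = sr e \<Longrightarrow> cm (cm e (iv b)) b = e"
  by (metis assoc closed(3) iv_props(1,2,4) unit_r)

lemma iv_iv [simp]: "a \<in> Ar \<Longrightarrow> iv (iv a) = a"
  by (metis L2 closed(3) iv_props(1,2,3) unit_l)

lemma units_iff: "u \<in> U0 \<longleftrightarrow> u \<in> Ar \<and> rg u = u"
  unfolding units_def by (metis closed(2) image_iff sr_rg(4))

lemma unit_sr: "u \<in> U0 \<Longrightarrow> sr u = u"
  by (metis sr_rg(3) units_iff)

lemma units_sub: "U0 \<subseteq> Ar" using units_iff by blast

lemma sr_unit [simp]: "a \<in> Ar \<Longrightarrow> sr a \<in> U0" and rg_unit [simp]: "a \<in> Ar \<Longrightarrow> rg a \<in> U0"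
  by (simp_all add: units_iff)

lemma topspace_UT: "topspace UT = U0"
  unfolding unit_top_def using units_sub Ar_top by auto

lemma units_open: "openin TG U0"
proof (subst openin_subopen, intro ballI)
  fix x assume x: "x \<in> U0"
  have xa: "x \<in> topspace TG" using x units_sub Ar_top by blast
  obtain W where W: "openin TG W" "x \<in> W" "W \<subseteq> topspace TG" "inj_on rg W"
    using lh_local_inj[OF lh_r _ xa] by blast
  have c: "continuous_map TG TG rg"
    using lh_continuous[OF lh_r] unfolding unit_top_def
    using continuous_map_into_fulltopology by blast
  let ?W = "{y \<in> topspace TG. rg y \<in> W} \<inter> W"
  have "openin TG ?W" using c W(1) openin_continuous_map_preimage by blast
  moreover have "x \<in> ?W" using W xa x units_iff by auto
  moreover have "?W \<subseteq> U0"
  proof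
    fix y assume y: "y \<in> ?W"
    then have ya: "y \<in> Ar" using Ar_top by blast
    have "rg (rg y) = rg y" using ya by simp
    then have "rg y = y" using W(4) y unfolding inj_on_def by blast
    then show "y \<in> U0" using ya units_iff by blast
  qed
  ultimately show "\<exists>T. openin TG T \<and> x \<in> T \<and> T \<subseteq> U0" by blast
qed

lemma openin_UT: "openin UT V \<Longrightarrow> openin TG V"
  unfolding unit_top_def using units_open openin_trans_full by blast

lemma compactin_UT: "compactin UT V \<Longrightarrow> compactin TG V"
  unfolding unit_top_def by (simp add: compactin_subtopology)

lemma haus_UT: "Hausdorff_space UT"
  unfolding unit_top_def using haus Hausdorff_space_subtopology by blast

lemma separate:
  assumes "z \<in> U0" "finite E" "z \<notin> E"
  shows "\<exists>V. openin UT V \<and> compactin UT V \<and> z \<in> V \<and> V \<inter> E = {}"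
proof -
  have t1: "t1_space UT" using haus_UT Hausdorff_imp_t1_space by blast
  have "finite (E \<inter> U0)" "E \<inter> U0 \<subseteq> topspace UT" using assms(2) topspace_UT by auto
  then have "closedin UT (E \<inter> U0)"
    using t1 t1_space_closedin_finite by blast
  then have "openin UT (topspace UT - (E \<inter> U0))" by (simp add: closedin_def)
  moreover have "topspace UT - (E \<inter> U0) = U0 - E" using topspace_UT by auto
  ultimately have "openin UT (U0 - E)" by simp
  then show ?thesis using ample[of "U0 - E" z] assms by blast
qed

lemma cover_finite:
  assumes "finite E" "E \<subseteq> U0"
  shows "\<exists>V. openin UT V \<and> compactin UT V \<and> E \<subseteq> V"
proof -
  have "\<forall>z\<in>E. \<exists>V. openin UT V \<and> compactin UT V \<and> z \<in> V"
    using separate[of _ "{}"] assms by blast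
  then obtain K where K: "\<And>z. z \<in> E \<Longrightarrow> openin UT (K z) \<and> compactin UT (K z) \<and> z \<in> K z"
    by metis
  show ?thesis
    using K assms by (intro exI[of _ "\<Union>(K ` E)"]) (auto intro!: compactin_Union)
qed

end

context AG begin

lemma iv_unit: "u \<in> U0 \<Longrightarrow> iv u = u"
proof -
  assume u: "u \<in> U0"
  then have ua: "u \<in> Ar" "rg u = u" "sr u = u" using units_iff unit_sr by auto
  have "iv u = cm (iv u) (sr (iv u))" by (rule unit_r[OF closed(3)[OF ua(1)], symmetric])
  also have "\<dots> = cm (iv u) u" using ua by simp
  also have "\<dots> = u" using ua by simp
  finally show ?thesis .
qed

lemma st_zero: "f \<in> steinberg G \<Longrightarrow> \<eta> \<notin> Ar \<Longrightarrow> f \<eta> = 0"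
  unfolding steinberg_def by blast

lemma st_loc: "f \<in> steinberg G \<Longrightarrow> \<eta> \<in> Ar \<Longrightarrow> \<exists>U. openin TG U \<and> \<eta> \<in> U \<and> (\<forall>\<xi>\<in>U. f \<xi> = f \<eta>)"
  unfolding steinberg_def by blast

lemma supp_iff: "\<eta> \<in> supp f \<longleftrightarrow> f \<eta> \<noteq> 0" by (simp add: supp_def)

lemma supp_sub: "f \<in> steinberg G \<Longrightarrow> supp f \<subseteq> Ar"
  by (metis st_zero supp_iff subsetI)

lemma supp_open: assumes "f \<in> steinberg G" shows "openin TG (supp f)"
proof (subst openin_subopen, intro ballI)
  fix x assume x: "x \<in> supp f"
  then have "x \<in> Ar" using supp_sub assms by blast
  then obtain U where "openin TG U" "x \<in> U" "\<forall>\<xi>\<in>U. f \<xi> = f x" using st_loc assms by blast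
  then show "\<exists>T. openin TG T \<and> x \<in> T \<and> T \<subseteq> supp f" using x unfolding supp_iff
    by (metis subsetI supp_iff)
qed

lemma supp_closed: assumes "f \<in> steinberg G" shows "closedin TG (supp f)"
  unfolding closedin_def
proof
  show "supp f \<subseteq> topspace TG" using supp_sub assms Ar_top by blast
  show "openin TG (topspace TG - supp f)"
  proof (subst openin_subopen, intro ballI)
    fix x assume x: "x \<in> topspace TG - supp f"
    then have "x \<in> Ar" using Ar_top by blast
    then obtain U where U: "openin TG U" "x \<in> U" "\<forall>\<xi>\<in>U. f \<xi> = f x" using st_loc assms by blast
    have "U \<subseteq> topspace TG" using U(1) openin_subset by blast
    have "\<forall>\<xi>\<in>U. f \<xi> = 0" using U(3) x by (simp add: supp_iff)
    then have "U \<subseteq> topspace TG - supp f" using \<open>U \<subseteq> topspace TG\<close> by (auto simp: supp_iff)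
    then show "\<exists>T. openin TG T \<and> x \<in> T \<and> T \<subseteq> topspace TG - supp f"
      using U(1,2) by blast
  qed
qed

lemma supp_compact: assumes "f \<in> steinberg G" shows "compactin TG (supp f)"
proof -
  have "TG closure_of supp f = supp f" using supp_closed[OF assms] by (rule closure_of_closedin)
  moreover have "compactin TG (TG closure_of supp f)" using assms unfolding steinberg_def by blast
  ultimately show ?thesis by simp
qed

lemma fin_r: "f \<in> steinberg G \<Longrightarrow> finite {\<alpha> \<in> supp f. rg \<alpha> = w}"
  using lh_finite_fibre[OF lh_r supp_compact] by blast
lemma fin_s: "f \<in> steinberg G \<Longrightarrow> finite {\<alpha> \<in> supp f. sr \<alpha> = w}"
  using lh_finite_fibre[OF lh_s supp_compact] by blast

lemma ind_diag:
  assumes "openin UT V" "compactin UT V"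
  shows "(indicator V :: 'g \<Rightarrow> 'a::comm_ring_1) \<in> diag_sub G"
proof -
  have VU: "V \<subseteq> U0" using assms(1) openin_subset topspace_UT by blast
  have Vo: "openin TG V" using openin_UT assms(1) by blast
  have Vc: "compactin TG V" using compactin_UT assms(2) by blast
  have Vcl: "closedin TG V" using compactin_imp_closedin[OF haus Vc] .
  have supp: "supp (indicator V :: 'g \<Rightarrow> 'a) = V" by (auto simp: supp_iff indicator_def)
  have "(indicator V :: 'g \<Rightarrow> 'a) \<in> steinberg G"
    unfolding steinberg_def
  proof (intro CollectI conjI allI impI ballI)
    fix \<eta> assume "\<eta> \<notin> Ar" then show "(indicator V :: 'g \<Rightarrow> 'a) \<eta> = 0" using VU units_sub by (auto simp: indicator_def)
  next
    fix \<eta> assume e: "\<eta> \<in> Ar"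
    show "\<exists>U. openin TG U \<and> \<eta> \<in> U \<and> (\<forall>\<xi>\<in>U. (indicator V :: 'g \<Rightarrow> 'a) \<xi> = indicator V \<eta>)"
    proof (cases "\<eta> \<in> V")
      case True then show ?thesis using Vo by (intro exI[of _ V]) auto
    next
      case False
      have "openin TG (topspace TG - V)" using Vcl closedin_def by blast
      then show ?thesis using False e Ar_top by (intro exI[of _ "topspace TG - V"]) auto
    qed
  next
    show "compactin TG (TG closure_of supp (indicator V :: 'g \<Rightarrow> 'a))"
      using supp Vcl Vc closure_of_closedin by metis
  qed
  then show ?thesis unfolding diag_sub_def using supp VU by auto
qed

lemma diag_zero: "d \<in> diag_sub G \<Longrightarrow> \<eta> \<notin> U0 \<Longrightarrow> d \<eta> = 0"
proof -
  assume "d \<in> diag_sub G" "\<eta> \<notin> U0"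
  then have "supp d \<subseteq> U0" "\<eta> \<notin> supp d" unfolding diag_sub_def by auto
  then show "d \<eta> = 0" by (simp add: supp_iff)
qed

lemma conv_out: "\<eta> \<notin> Ar \<Longrightarrow> conv G f h \<eta> = 0"
proof -
  assume e: "\<eta> \<notin> Ar"
  have "{(\<alpha>, \<beta>) \<in> composable G. cm \<alpha> \<beta> = \<eta> \<and> f \<alpha> * h \<beta> \<noteq> 0} = {}"
    using e cm_props(1) unfolding composable_def by auto
  then show ?thesis by (simp only: conv_def sum.empty)
qed

lemma conv_r:
  assumes e: "\<eta> \<in> Ar" and S: "finite S" "S \<subseteq> {\<alpha>\<in>Ar. rg \<alpha> = rg \<eta>}"
    "\<And>\<alpha>. \<alpha> \<in> Ar \<Longrightarrow> rg \<alpha> = rg \<eta> \<Longrightarrow> f \<alpha> \<noteq> 0 \<Longrightarrow> \<alpha> \<in> S"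
  shows "conv G f h \<eta> = (\<Sum>\<alpha>\<in>S. f \<alpha> * h (cm (iv \<alpha>) \<eta>))"
proof -
  let ?P = "{(\<alpha>, \<beta>) \<in> composable G. cm \<alpha> \<beta> = \<eta> \<and> f \<alpha> * h \<beta> \<noteq> 0}"
  let ?S = "{\<alpha>\<in>S. f \<alpha> * h (cm (iv \<alpha>) \<eta>) \<noteq> 0}"
  have 1: "(\<Sum>\<alpha>\<in>S. f \<alpha> * h (cm (iv \<alpha>) \<eta>)) = (\<Sum>\<alpha>\<in>?S. f \<alpha> * h (cm (iv \<alpha>) \<eta>))"
    using S(1) by (intro sum.mono_neutral_right) auto
  have bij: "bij_betw (\<lambda>\<alpha>. (\<alpha>, cm (iv \<alpha>) \<eta>)) ?S ?P"
  proof (rule bij_betwI')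
    show "\<And>x y. x \<in> ?S \<Longrightarrow> y \<in> ?S \<Longrightarrow> ((x, cm (iv x) \<eta>) = (y, cm (iv y) \<eta>)) = (x = y)" by auto
    fix x assume x: "x \<in> ?S"
    then have xa: "x \<in> Ar" "rg x = rg \<eta>" using S(2) by auto
    show "(x, cm (iv x) \<eta>) \<in> ?P"
      using x xa e cm_props[of "iv x" \<eta>] L3[of x \<eta>] unfolding composable_def by auto
  next
    fix p assume p: "p \<in> ?P"
    then obtain a b where ab: "p = (a, b)" "a \<in> Ar" "b \<in> Ar" "sr a = rg b" "cm a b = \<eta>" "f a * h b \<noteq> 0"
      unfolding composable_def by auto
    have "rg a = rg \<eta>" using ab cm_props by metis
    moreover have "f a \<noteq> 0" using ab(6) by auto
    ultimately have "a \<in> S" using S(3)[OF ab(2)] by blast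
    moreover have "cm (iv a) \<eta> = b" using L1 ab by metis
    ultimately show "\<exists>x\<in>?S. p = (x, cm (iv x) \<eta>)" using ab by auto
  qed
  have "conv G f h \<eta> = (\<Sum>(\<alpha>, \<beta>)\<in>?P. f \<alpha> * h \<beta>)" unfolding conv_def by simp
  also have "\<dots> = (\<Sum>\<alpha>\<in>?S. f \<alpha> * h (cm (iv \<alpha>) \<eta>))"
    using sum.reindex_bij_betw[OF bij, of "\<lambda>(\<alpha>, \<beta>). f \<alpha> * h \<beta>"] by simp
  finally show ?thesis using 1 by simp
qed

lemma conv_s:
  assumes e: "\<eta> \<in> Ar" and S: "finite S" "S \<subseteq> {\<beta>\<in>Ar. sr \<beta> = sr \<eta>}"
    "\<And>\<beta>. \<beta> \<in> Ar \<Longrightarrow> sr \<beta> = sr \<eta> \<Longrightarrow> h \<beta> \<noteq> 0 \<Longrightarrow> \<beta> \<in> S"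
  shows "conv G f h \<eta> = (\<Sum>\<beta>\<in>S. f (cm \<eta> (iv \<beta>)) * h \<beta>)"
proof -
  let ?P = "{(\<alpha>, \<beta>) \<in> composable G. cm \<alpha> \<beta> = \<eta> \<and> f \<alpha> * h \<beta> \<noteq> 0}"
  let ?S = "{\<beta>\<in>S. f (cm \<eta> (iv \<beta>)) * h \<beta> \<noteq> 0}"
  have 1: "(\<Sum>\<beta>\<in>S. f (cm \<eta> (iv \<beta>)) * h \<beta>) = (\<Sum>\<beta>\<in>?S. f (cm \<eta> (iv \<beta>)) * h \<beta>)"
    using S(1) by (intro sum.mono_neutral_right) auto
  have bij: "bij_betw (\<lambda>\<beta>. (cm \<eta> (iv \<beta>), \<beta>)) ?S ?P"
  proof (rule bij_betwI')
    show "\<And>x y. x \<in> ?S \<Longrightarrow> y \<in> ?S \<Longrightarrow> ((cm \<eta> (iv x), x) = (cm \<eta> (iv y), y)) = (x = y)" by auto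
    fix x assume x: "x \<in> ?S"
    then have xa: "x \<in> Ar" "sr x = sr \<eta>" using S(2) by auto
    show "(cm \<eta> (iv x), x) \<in> ?P"
      using x xa e cm_props[of \<eta> "iv x"] L4[of x \<eta>] unfolding composable_def by auto
  next
    fix p assume p: "p \<in> ?P"
    then obtain a b where ab: "p = (a, b)" "a \<in> Ar" "b \<in> Ar" "sr a = rg b" "cm a b = \<eta>" "f a * h b \<noteq> 0"
      unfolding composable_def by auto
    have "sr b = sr \<eta>" using ab cm_props by metis
    moreover have "h b \<noteq> 0" using ab(6) by auto
    ultimately have "b \<in> S" using S(3)[OF ab(3)] by blast
    moreover have "cm \<eta> (iv b) = a" using L2 ab by metis
    ultimately show "\<exists>x\<in>?S. p = (cm \<eta> (iv x), x)" using ab by auto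
  qed
  have "conv G f h \<eta> = (\<Sum>(\<alpha>, \<beta>)\<in>?P. f \<alpha> * h \<beta>)" unfolding conv_def by simp
  also have "\<dots> = (\<Sum>\<beta>\<in>?S. f (cm \<eta> (iv \<beta>)) * h \<beta>)"
    using sum.reindex_bij_betw[OF bij, of "\<lambda>(\<alpha>, \<beta>). f \<alpha> * h \<beta>"] by simp
  finally show ?thesis using 1 by simp
qed

lemma conv_ind:
  assumes f: "f \<in> steinberg G" and V: "V \<subseteq> U0"
  shows "conv G f (indicator V) \<gamma> = f \<gamma> * indicator V (sr \<gamma>)"
proof (cases "\<gamma> \<in> Ar")
  case False then show ?thesis using conv_out[OF False] st_zero[OF f False] by simp
next
  case True
  have "conv G f (indicator V) \<gamma> = (\<Sum>\<beta>\<in>{sr \<gamma>}. f (cm \<gamma> (iv \<beta>)) * indicator V \<beta>)"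
  proof (rule conv_s[OF True])
    fix \<beta> assume "\<beta> \<in> Ar" "sr \<beta> = sr \<gamma>" "(indicator V \<beta> :: 'a) \<noteq> 0"
    then show "\<beta> \<in> {sr \<gamma>}" using V unit_sr by (auto simp: indicator_def split: if_splits)
  qed (use True in auto)
  also have "\<dots> = f (cm \<gamma> (iv (sr \<gamma>))) * indicator V (sr \<gamma>)" by (simp only: sum.insert_if sum.empty finite.emptyI empty_iff if_False add_0_right)
  also have "\<dots> = f \<gamma> * indicator V (sr \<gamma>)" using True iv_unit[OF sr_unit[OF True]] by simp
  finally show ?thesis .
qed

end

context AG begin

lemma norm_sym: "(m, n) \<in> normalisers G \<Longrightarrow> (n, m) \<in> normalisers G"
  unfolding normalisers_def by auto

lemma norm_st: "(m, n) \<in> normalisers G \<Longrightarrow> m \<in> steinberg G \<and> n \<in> steinberg G"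
  unfolding normalisers_def by auto

lemma sepV:
  assumes f: "f \<in> steinberg G" and z: "z \<in> U0"
  shows "\<exists>V. openin UT V \<and> compactin UT V \<and> z \<in> V \<and>
     (\<forall>\<alpha>\<in>{\<alpha> \<in> supp f. rg \<alpha> = w}. sr \<alpha> \<in> V \<longleftrightarrow> sr \<alpha> = z)"
proof -
  let ?E = "sr ` {\<alpha> \<in> supp f. rg \<alpha> = w} - {z}"
  have "finite ?E" using fin_r[OF f] by (intro finite_Diff finite_imageI)
  moreover have "z \<notin> ?E" by simp
  then obtain V where "openin UT V" "compactin UT V" "z \<in> V" "V \<inter> ?E = {}"
    using separate[OF z \<open>finite ?E\<close>] by blast
  moreover have "\<forall>\<alpha>\<in>{\<alpha> \<in> supp f. rg \<alpha> = w}. sr \<alpha> \<in> V \<longleftrightarrow> sr \<alpha> = z"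
  proof
    fix \<alpha> assume a: "\<alpha> \<in> {\<alpha> \<in> supp f. rg \<alpha> = w}"
    show "sr \<alpha> \<in> V \<longleftrightarrow> sr \<alpha> = z"
    proof
      assume "sr \<alpha> \<in> V"
      moreover have "sr \<alpha> \<in> sr ` {\<alpha> \<in> supp f. rg \<alpha> = w}" using a by (rule imageI)
      ultimately show "sr \<alpha> = z" using \<open>V \<inter> ?E = {}\<close> by blast
    qed (use \<open>z \<in> V\<close> in simp)
  qed
  ultimately show ?thesis by blast
qed

lemma normA:
  fixes m n :: "'g \<Rightarrow> 'a::comm_ring_1"
  assumes N: "(m, n) \<in> normalisers G" and V: "openin UT V" "compactin UT V"
    and e: "\<eta> \<in> Ar" "\<eta> \<notin> U0"
  shows "(\<Sum>\<alpha>\<in>{\<alpha> \<in> supp m. rg \<alpha> = rg \<eta>}. m \<alpha> * indicator V (sr \<alpha>) * n (cm (iv \<alpha>) \<eta>)) = 0"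
proof -
  have d: "(indicator V :: 'g \<Rightarrow> 'a) \<in> diag_sub G" using ind_diag[OF V] .
  have ms: "m \<in> steinberg G" using norm_st[OF N] by blast
  have VU: "V \<subseteq> U0" using V(1) openin_subset topspace_UT by blast
  have "conv G (conv G m (indicator V)) n \<in> diag_sub G" using N d unfolding normalisers_def by blast
  then have "conv G (conv G m (indicator V)) n \<eta> = 0" using diag_zero e(2) by blast
  moreover have "conv G (conv G m (indicator V)) n \<eta> =
     (\<Sum>\<alpha>\<in>{\<alpha> \<in> supp m. rg \<alpha> = rg \<eta>}. conv G m (indicator V) \<alpha> * n (cm (iv \<alpha>) \<eta>))"
  proof (rule conv_r[OF e(1) fin_r[OF ms]])
    show "{\<alpha> \<in> supp m. rg \<alpha> = rg \<eta>} \<subseteq> {\<alpha> \<in> Ar. rg \<alpha> = rg \<eta>}" using supp_sub[OF ms] by blast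
    fix \<alpha> assume "\<alpha> \<in> Ar" "rg \<alpha> = rg \<eta>" "conv G m (indicator V) \<alpha> \<noteq> 0"
    then show "\<alpha> \<in> {\<alpha> \<in> supp m. rg \<alpha> = rg \<eta>}" using conv_ind[OF ms VU] by (auto simp: supp_iff)
  qed
  ultimately show ?thesis using conv_ind[OF ms VU] by simp
qed

lemma normAs:
  fixes m n :: "'g \<Rightarrow> 'a::comm_ring_1"
  assumes N: "(m, n) \<in> normalisers G" and V: "openin UT V" "compactin UT V"
    and e: "\<eta> \<in> Ar" "\<eta> \<notin> U0"
  shows "(\<Sum>\<gamma>\<in>{\<gamma> \<in> supp n. sr \<gamma> = sr \<eta>}. m (cm \<eta> (iv \<gamma>)) * indicator V (rg \<gamma>) * n \<gamma>) = 0"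
proof -
  have d: "(indicator V :: 'g \<Rightarrow> 'a) \<in> diag_sub G" using ind_diag[OF V] .
  have ms: "m \<in> steinberg G" "n \<in> steinberg G" using norm_st[OF N] by blast+
  have VU: "V \<subseteq> U0" using V(1) openin_subset topspace_UT by blast
  have "conv G (conv G m (indicator V)) n \<in> diag_sub G" using N d unfolding normalisers_def by blast
  then have "conv G (conv G m (indicator V)) n \<eta> = 0" using diag_zero e(2) by blast
  moreover have "conv G (conv G m (indicator V)) n \<eta> =
     (\<Sum>\<gamma>\<in>{\<gamma> \<in> supp n. sr \<gamma> = sr \<eta>}. conv G m (indicator V) (cm \<eta> (iv \<gamma>)) * n \<gamma>)"
  proof (rule conv_s[OF e(1) fin_s[OF ms(2)]])
    show "{\<alpha> \<in> supp n. sr \<alpha> = sr \<eta>} \<subseteq> {\<alpha> \<in> Ar. sr \<alpha> = sr \<eta>}" using supp_sub[OF ms(2)] by blast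
    fix \<alpha> assume "\<alpha> \<in> Ar" "sr \<alpha> = sr \<eta>" "n \<alpha> \<noteq> 0"
    then show "\<alpha> \<in> {\<alpha> \<in> supp n. sr \<alpha> = sr \<eta>}" by (auto simp: supp_iff)
  qed
  moreover have "conv G m (indicator V) (cm \<eta> (iv \<gamma>)) = m (cm \<eta> (iv \<gamma>)) * indicator V (rg \<gamma>)"
    if "\<gamma> \<in> {\<gamma> \<in> supp n. sr \<gamma> = sr \<eta>}" for \<gamma>
  proof -
    have g: "\<gamma> \<in> Ar" "sr \<gamma> = sr \<eta>" using that supp_sub[OF ms(2)] by auto
    have "sr (cm \<eta> (iv \<gamma>)) = rg \<gamma>" using cm_props(2)[of \<eta> "iv \<gamma>"] g e(1) by simp
    then show ?thesis using conv_ind[OF ms(1) VU] by simp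
  qed
  ultimately show ?thesis by simp
qed

end

context AG begin

lemma not_unit_l:
  assumes "\<alpha> \<in> Ar" "\<alpha>0 \<in> Ar" "rg \<alpha> = rg \<alpha>0" "\<alpha> \<noteq> \<alpha>0"
  shows "cm (iv \<alpha>) \<alpha>0 \<in> Ar" "cm (iv \<alpha>) \<alpha>0 \<notin> U0" "sr (cm (iv \<alpha>) \<alpha>0) = sr \<alpha>0"
proof -
  show a: "cm (iv \<alpha>) \<alpha>0 \<in> Ar" using cm_props(1)[of "iv \<alpha>" \<alpha>0] assms by simp
  show "sr (cm (iv \<alpha>) \<alpha>0) = sr \<alpha>0" using cm_props(2)[of "iv \<alpha>" \<alpha>0] assms by simp
  show "cm (iv \<alpha>) \<alpha>0 \<notin> U0"
  proof
    assume u: "cm (iv \<alpha>) \<alpha>0 \<in> U0"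
    have "rg (cm (iv \<alpha>) \<alpha>0) = sr \<alpha>" using cm_props(3)[of "iv \<alpha>" \<alpha>0] assms by simp
    then have eq: "cm (iv \<alpha>) \<alpha>0 = sr \<alpha>" using u units_iff by auto
    have "\<alpha>0 = cm \<alpha> (cm (iv \<alpha>) \<alpha>0)" using L3[of \<alpha> \<alpha>0] assms by simp
    also have "\<dots> = \<alpha>" using eq assms by simp
    finally show False using assms by simp
  qed
qed

lemma not_unit_r:
  assumes "\<gamma> \<in> Ar" "\<alpha>0 \<in> Ar" "sr \<gamma> = sr \<alpha>0" "\<gamma> \<noteq> \<alpha>0"
  shows "cm \<alpha>0 (iv \<gamma>) \<in> Ar" "cm \<alpha>0 (iv \<gamma>) \<notin> U0" "rg (cm \<alpha>0 (iv \<gamma>)) = rg \<alpha>0"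
proof -
  show a: "cm \<alpha>0 (iv \<gamma>) \<in> Ar" using cm_props(1)[of \<alpha>0 "iv \<gamma>"] assms by simp
  show "rg (cm \<alpha>0 (iv \<gamma>)) = rg \<alpha>0" using cm_props(3)[of \<alpha>0 "iv \<gamma>"] assms by simp
  show "cm \<alpha>0 (iv \<gamma>) \<notin> U0"
  proof
    assume u: "cm \<alpha>0 (iv \<gamma>) \<in> U0"
    have "sr (cm \<alpha>0 (iv \<gamma>)) = rg \<gamma>" using cm_props(2)[of \<alpha>0 "iv \<gamma>"] assms by simp
    then have eq: "cm \<alpha>0 (iv \<gamma>) = rg \<gamma>" using u unit_sr by auto
    have "\<alpha>0 = cm (cm \<alpha>0 (iv \<gamma>)) \<gamma>" using L4[of \<gamma> \<alpha>0] assms by simp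
    also have "\<dots> = \<gamma>" using eq assms by simp
    finally show False using assms by simp
  qed
qed

lemma lam:
  fixes m n :: "'g \<Rightarrow> 'a::idom"
  assumes N: "(m, n) \<in> normalisers G" and a0: "\<alpha>0 \<in> supp m"
    and V: "openin UT V" "compactin UT V"
      "\<forall>\<alpha>\<in>{\<alpha> \<in> supp m. rg \<alpha> = rg \<alpha>0}. sr \<alpha> \<in> V \<longleftrightarrow> sr \<alpha> = sr \<alpha>0"
  shows "(\<Sum>\<alpha>\<in>{\<alpha> \<in> supp m. rg \<alpha> = rg \<alpha>0}. m \<alpha> * indicator V (sr \<alpha>) * n (iv \<alpha>)) = 1"
proof -
  have ms: "m \<in> steinberg G" "n \<in> steinberg G" using norm_st[OF N] by blast+
  have a0a: "\<alpha>0 \<in> Ar" using a0 supp_sub[OF ms(1)] by blast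
  define w where "w = rg \<alpha>0"
  define x where "x = sr \<alpha>0"
  define Fr where "Fr = {\<alpha> \<in> supp m. rg \<alpha> = w}"
  define Fs where "Fs = {\<gamma> \<in> supp m. sr \<gamma> = x}"
  have fFr: "finite Fr" unfolding Fr_def using fin_r[OF ms(1)] .
  have fFs: "finite Fs" unfolding Fs_def using fin_s[OF ms(1)] .
  have FrA: "\<And>\<alpha>. \<alpha> \<in> Fr \<Longrightarrow> \<alpha> \<in> Ar \<and> rg \<alpha> = w \<and> m \<alpha> \<noteq> 0"
  proof -
    fix \<alpha> assume "\<alpha> \<in> Fr"
    then have "\<alpha> \<in> supp m" "rg \<alpha> = w" unfolding Fr_def by auto
    then show "\<alpha> \<in> Ar \<and> rg \<alpha> = w \<and> m \<alpha> \<noteq> 0" using subsetD[OF supp_sub[OF ms(1)]] by (simp add: supp_iff)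
  qed
  have FsA: "\<And>\<gamma>. \<gamma> \<in> Fs \<Longrightarrow> \<gamma> \<in> Ar \<and> sr \<gamma> = x \<and> m \<gamma> \<noteq> 0"
  proof -
    fix \<gamma> assume "\<gamma> \<in> Fs"
    then have "\<gamma> \<in> supp m" "sr \<gamma> = x" unfolding Fs_def by auto
    then show "\<gamma> \<in> Ar \<and> sr \<gamma> = x \<and> m \<gamma> \<noteq> 0" using subsetD[OF supp_sub[OF ms(1)]] by (simp add: supp_iff)
  qed
  have a0Fr: "\<alpha>0 \<in> Fr" and a0Fs: "\<alpha>0 \<in> Fs" unfolding Fr_def Fs_def w_def x_def using a0 by auto
  define T where "T \<alpha> \<gamma> = m \<alpha> * n (cm (iv \<alpha>) (cm \<alpha>0 (iv \<gamma>))) * m \<gamma>" for \<alpha> \<gamma>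
  have cf: "finite (rg ` Fs)" "rg ` Fs \<subseteq> U0" using fFs FsA by auto
  obtain W where W: "openin UT W" "compactin UT W" "rg ` Fs \<subseteq> W" using cover_finite[OF cf] by blast
  have step1: "m \<alpha>0 = conv G (conv G m n) m \<alpha>0" using N unfolding normalisers_def by auto
  have step2: "conv G (conv G m n) m \<alpha>0 = (\<Sum>\<gamma>\<in>Fs. conv G m n (cm \<alpha>0 (iv \<gamma>)) * m \<gamma>)"
  proof (rule conv_s[OF a0a fFs])
    show "Fs \<subseteq> {\<beta> \<in> Ar. sr \<beta> = sr \<alpha>0}" using FsA x_def by blast
    fix \<beta> assume "\<beta> \<in> Ar" "sr \<beta> = sr \<alpha>0" "m \<beta> \<noteq> 0"
    then show "\<beta> \<in> Fs" unfolding Fs_def x_def by (simp add: supp_iff)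
  qed
  have step3: "conv G m n (cm \<alpha>0 (iv \<gamma>)) = (\<Sum>\<alpha>\<in>Fr. m \<alpha> * n (cm (iv \<alpha>) (cm \<alpha>0 (iv \<gamma>))))"
    if g: "\<gamma> \<in> Fs" for \<gamma>
  proof -
    have ga: "\<gamma> \<in> Ar" "sr \<gamma> = x" using FsA g by auto
    have e: "cm \<alpha>0 (iv \<gamma>) \<in> Ar" "rg (cm \<alpha>0 (iv \<gamma>)) = w"
      using cm_props(1,3)[of \<alpha>0 "iv \<gamma>"] ga a0a x_def w_def by auto
    show ?thesis
    proof (rule conv_r[OF e(1) fFr])
      show "Fr \<subseteq> {\<alpha> \<in> Ar. rg \<alpha> = rg (cm \<alpha>0 (iv \<gamma>))}" using FrA e(2) by blast
      fix \<alpha> assume "\<alpha> \<in> Ar" "rg \<alpha> = rg (cm \<alpha>0 (iv \<gamma>))" "m \<alpha> \<noteq> 0"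
      then show "\<alpha> \<in> Fr" unfolding Fr_def using e(2) by (simp add: supp_iff)
    qed
  qed
  have "m \<alpha>0 = (\<Sum>\<gamma>\<in>Fs. \<Sum>\<alpha>\<in>Fr. T \<alpha> \<gamma>)"
    unfolding step1 step2 T_def using step3 by (simp add: sum_distrib_right)
  also have "\<dots> = (\<Sum>\<alpha>\<in>Fr. \<Sum>\<gamma>\<in>Fs. T \<alpha> \<gamma>)" by (rule sum.swap)
  also have "\<dots> = (\<Sum>\<alpha>\<in>Fr. indicator V (sr \<alpha>) * (\<Sum>\<gamma>\<in>Fs. T \<alpha> \<gamma>))"
  proof (rule sum.cong[OF refl])
    fix \<alpha> assume a: "\<alpha> \<in> Fr"
    show "(\<Sum>\<gamma>\<in>Fs. T \<alpha> \<gamma>) = indicator V (sr \<alpha>) * (\<Sum>\<gamma>\<in>Fs. T \<alpha> \<gamma>)"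
    proof (cases "\<alpha> = \<alpha>0")
      case True
      have "sr \<alpha>0 \<in> V" using V(3) a0 by blast
      then show ?thesis using True by simp
    next
      case False
      have aa: "\<alpha> \<in> Ar" "rg \<alpha> = rg \<alpha>0" using FrA a w_def by auto
      note nu = not_unit_l[OF aa(1) a0a aa(2) False]
      have "(\<Sum>\<gamma>\<in>{\<gamma> \<in> supp m. sr \<gamma> = sr (cm (iv \<alpha>) \<alpha>0)}.
          n (cm (cm (iv \<alpha>) \<alpha>0) (iv \<gamma>)) * indicator W (rg \<gamma>) * m \<gamma>) = 0"
        using normAs[OF norm_sym[OF N] W(1,2) nu(1,2)] .
      moreover have "{\<gamma> \<in> supp m. sr \<gamma> = sr (cm (iv \<alpha>) \<alpha>0)} = Fs" unfolding Fs_def x_def using nu(3) by simp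
      moreover have "n (cm (cm (iv \<alpha>) \<alpha>0) (iv \<gamma>)) * indicator W (rg \<gamma>) * m \<gamma> =
          n (cm (iv \<alpha>) (cm \<alpha>0 (iv \<gamma>))) * m \<gamma>" if g: "\<gamma> \<in> Fs" for \<gamma>
      proof -
        have ga: "\<gamma> \<in> Ar" "sr \<gamma> = x" using FsA g by auto
        have "rg \<gamma> \<in> W" using W(3) g by blast
        moreover have "cm (cm (iv \<alpha>) \<alpha>0) (iv \<gamma>) = cm (iv \<alpha>) (cm \<alpha>0 (iv \<gamma>))"
          using assoc[of "iv \<alpha>" \<alpha>0 "iv \<gamma>"] aa a0a ga x_def by simp
        ultimately show ?thesis by simp
      qed
      ultimately have "(\<Sum>\<gamma>\<in>Fs. n (cm (iv \<alpha>) (cm \<alpha>0 (iv \<gamma>))) * m \<gamma>) = 0"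
        by (metis (no_types, lifting) sum.cong)
      then have "(\<Sum>\<gamma>\<in>Fs. T \<alpha> \<gamma>) = 0"
        unfolding T_def by (simp add: mult.assoc sum_distrib_left[symmetric])
      then show ?thesis by simp
    qed
  qed
  also have "\<dots> = (\<Sum>\<alpha>\<in>Fr. \<Sum>\<gamma>\<in>Fs. indicator V (sr \<alpha>) * T \<alpha> \<gamma>)"
    by (simp add: sum_distrib_left)
  also have "\<dots> = (\<Sum>\<gamma>\<in>Fs. \<Sum>\<alpha>\<in>Fr. indicator V (sr \<alpha>) * T \<alpha> \<gamma>)" by (rule sum.swap)
  also have "\<dots> = (\<Sum>\<alpha>\<in>Fr. indicator V (sr \<alpha>) * T \<alpha> \<alpha>0)"
  proof -
    have "(\<Sum>\<alpha>\<in>Fr. indicator V (sr \<alpha>) * T \<alpha> \<gamma>) = 0" if g: "\<gamma> \<in> Fs - {\<alpha>0}" for \<gamma>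
    proof -
      have ga: "\<gamma> \<in> Ar" "sr \<gamma> = sr \<alpha>0" "\<gamma> \<noteq> \<alpha>0" using FsA g x_def by auto
      note nu = not_unit_r[OF ga(1) a0a ga(2,3)]
      have "(\<Sum>\<alpha>\<in>{\<alpha> \<in> supp m. rg \<alpha> = rg (cm \<alpha>0 (iv \<gamma>))}.
          m \<alpha> * indicator V (sr \<alpha>) * n (cm (iv \<alpha>) (cm \<alpha>0 (iv \<gamma>)))) = 0"
        using normA[OF N V(1,2) nu(1,2)] .
      moreover have "{\<alpha> \<in> supp m. rg \<alpha> = rg (cm \<alpha>0 (iv \<gamma>))} = Fr" unfolding Fr_def w_def using nu(3) by simp
      ultimately have "(\<Sum>\<alpha>\<in>Fr. m \<alpha> * indicator V (sr \<alpha>) * n (cm (iv \<alpha>) (cm \<alpha>0 (iv \<gamma>)))) * m \<gamma> = 0"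
        by simp
      then show ?thesis unfolding T_def sum_distrib_right by (simp add: ac_simps)
    qed
    then have "(\<Sum>\<gamma>\<in>Fs - {\<alpha>0}. \<Sum>\<alpha>\<in>Fr. indicator V (sr \<alpha>) * T \<alpha> \<gamma>) = 0" by simp
    then show ?thesis using sum.remove[OF fFs a0Fs, of "\<lambda>\<gamma>. \<Sum>\<alpha>\<in>Fr. indicator V (sr \<alpha>) * T \<alpha> \<gamma>"] by simp
  qed
  also have "\<dots> = (\<Sum>\<alpha>\<in>Fr. m \<alpha> * indicator V (sr \<alpha>) * n (iv \<alpha>)) * m \<alpha>0"
    unfolding sum_distrib_right
  proof (rule sum.cong[OF refl])
    fix \<alpha> assume a: "\<alpha> \<in> Fr"
    have aa: "\<alpha> \<in> Ar" "rg \<alpha> = w" using FrA a by auto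
    have "cm \<alpha>0 (iv \<alpha>0) = w" using a0a w_def by simp
    moreover have "cm (iv \<alpha>) w = iv \<alpha>" using aa unit_r[OF closed(3)[OF aa(1)]] by simp
    ultimately show "indicator V (sr \<alpha>) * T \<alpha> \<alpha>0 = m \<alpha> * indicator V (sr \<alpha>) * n (iv \<alpha>) * m \<alpha>0"
      unfolding T_def by (simp add: ac_simps)
  qed
  finally have "m \<alpha>0 = (\<Sum>\<alpha>\<in>Fr. m \<alpha> * indicator V (sr \<alpha>) * n (iv \<alpha>)) * m \<alpha>0" .
  moreover have "m \<alpha>0 \<noteq> 0" using a0 by (simp add: supp_iff)
  ultimately have "(\<Sum>\<alpha>\<in>Fr. m \<alpha> * indicator V (sr \<alpha>) * n (iv \<alpha>)) = 1"
    by (metis mult_cancel_right2)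
  then show ?thesis unfolding Fr_def w_def .
qed

end

context AG begin

lemma coc_car: "continuous_cocycle G \<Gamma> c \<Longrightarrow> a \<in> Ar \<Longrightarrow> c a \<in> carrier \<Gamma>"
  unfolding continuous_cocycle_def by blast

lemma coc_mul: "continuous_cocycle G \<Gamma> c \<Longrightarrow> a \<in> Ar \<Longrightarrow> b \<in> Ar \<Longrightarrow> sr a = rg b \<Longrightarrow>
    c (cm a b) = c a \<otimes>\<^bsub>\<Gamma>\<^esub> c b"
  unfolding continuous_cocycle_def composable_def by blast

lemma coc_unit:
  assumes gr: "group \<Gamma>" and cc: "continuous_cocycle G \<Gamma> c" and u: "u \<in> U0"
  shows "c u = \<one>\<^bsub>\<Gamma>\<^esub>"
proof -
  have ua: "u \<in> Ar" "rg u = u" "sr u = u" using u units_iff unit_sr by auto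
  have "cm u u = u" using unit_l[OF ua(1)] ua(2) by simp
  then have "c u \<otimes>\<^bsub>\<Gamma>\<^esub> c u = c u" using coc_mul[OF cc ua(1) ua(1)] ua by simp
  then show ?thesis using group.l_cancel_one[OF gr] coc_car[OF cc ua(1)] by blast
qed

lemma coc_inv:
  assumes gr: "group \<Gamma>" and cc: "continuous_cocycle G \<Gamma> c" and a: "a \<in> Ar"
  shows "c (iv a) = inv\<^bsub>\<Gamma>\<^esub> (c a)"
proof -
  have "c (iv a) \<otimes>\<^bsub>\<Gamma>\<^esub> c a = c (cm (iv a) a)" using coc_mul[OF cc, of "iv a" a] a by simp
  also have "\<dots> = \<one>\<^bsub>\<Gamma>\<^esub>" using coc_unit[OF gr cc] a by simp
  finally show ?thesis using group.inv_equality[OF gr] coc_car[OF cc] a closed(3) by metis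
qed

lemma id1:
  assumes hk: "h \<in> Ar" "k \<in> Ar" "\<alpha>0 \<in> Ar" and x: "sr \<alpha>0 = x" "rg h = x" "sr h = x" "rg k = x" "sr k = x"
  shows "cm (iv (cm \<alpha>0 h)) (cm \<alpha>0 (cm k (iv \<alpha>0))) = cm (cm (iv h) k) (iv \<alpha>0)"
proof -
  let ?X = "cm (cm (iv h) k) (iv \<alpha>0)"
  have ihk: "cm (iv h) k \<in> Ar" "rg (cm (iv h) k) = x" "sr (cm (iv h) k) = x"
    using cm_props[of "iv h" k] hk x by auto
  have X: "?X \<in> Ar" "rg ?X = x" using cm_props[of "cm (iv h) k" "iv \<alpha>0"] ihk hk x by auto
  have kia: "cm k (iv \<alpha>0) \<in> Ar" "rg (cm k (iv \<alpha>0)) = x" using cm_props[of k "iv \<alpha>0"] hk x by auto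
  have a1: "?X = cm (iv h) (cm k (iv \<alpha>0))"
    by (rule assoc) (use hk x in simp_all)
  have "cm h ?X = cm k (iv \<alpha>0)" unfolding a1 by (rule L3) (use hk x kia in simp_all)
  moreover have "cm (cm \<alpha>0 h) ?X = cm \<alpha>0 (cm h ?X)" by (rule assoc) (use hk x X in simp_all)
  ultimately have e1: "cm (cm \<alpha>0 h) ?X = cm \<alpha>0 (cm k (iv \<alpha>0))" by simp
  have ah: "cm \<alpha>0 h \<in> Ar" "sr (cm \<alpha>0 h) = x" using cm_props[of \<alpha>0 h] hk x by auto
  have "cm (iv (cm \<alpha>0 h)) (cm (cm \<alpha>0 h) ?X) = ?X" by (rule L1) (use ah X in simp_all)
  then show ?thesis using e1 by simp
qed

lemma id2:
  assumes hk: "h \<in> Ar" "k \<in> Ar" "\<alpha>0 \<in> Ar" and x: "sr \<alpha>0 = x" "rg h = x" "sr h = x" "rg k = x"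
  shows "cm (iv (cm h (iv \<alpha>0))) k = cm \<alpha>0 (cm (iv h) k)"
proof -
  let ?Z = "cm (iv h) k"
  have Z: "?Z \<in> Ar" "rg ?Z = x" using cm_props[of "iv h" k] hk x by auto
  let ?Y = "cm \<alpha>0 ?Z"
  have Y: "?Y \<in> Ar" "rg ?Y = rg \<alpha>0" using cm_props[of \<alpha>0 ?Z] Z hk x by auto
  have b: "cm h (iv \<alpha>0) \<in> Ar" "sr (cm h (iv \<alpha>0)) = rg \<alpha>0" using cm_props[of h "iv \<alpha>0"] hk x by auto
  have e1: "cm (cm h (iv \<alpha>0)) ?Y = cm h (cm (iv \<alpha>0) ?Y)" by (rule assoc) (use hk x Y in simp_all)
  have e2: "cm (iv \<alpha>0) ?Y = ?Z" by (rule L1) (use Z hk x in simp_all)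
  have e3: "cm h ?Z = k" by (rule L3) (use hk x in simp_all)
  have "cm (iv (cm h (iv \<alpha>0))) (cm (cm h (iv \<alpha>0)) ?Y) = ?Y" by (rule L1) (use b Y in simp_all)
  then show ?thesis using e1 e2 e3 by simp
qed

end

context AG begin

lemma conv_H:
  assumes Hm: "\<And>h1 h2. h1 \<in> H \<Longrightarrow> h2 \<in> H \<Longrightarrow> sr h1 = rg h2 \<Longrightarrow> cm h1 h2 \<in> H"
    and a: "\<And>h. a h \<noteq> 0 \<Longrightarrow> h \<in> H" and b: "\<And>h. b h \<noteq> 0 \<Longrightarrow> h \<in> H" and k: "k \<notin> H"
  shows "conv G a b k = 0"
proof -
  have "{(\<alpha>, \<beta>) \<in> composable G. cm \<alpha> \<beta> = k \<and> a \<alpha> * b \<beta> \<noteq> 0} = {}"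
  proof (rule equals0I)
    fix p assume "p \<in> {(\<alpha>, \<beta>) \<in> composable G. cm \<alpha> \<beta> = k \<and> a \<alpha> * b \<beta> \<noteq> 0}"
    then obtain s t where st0: "p = (s, t)" "sr s = rg t" "cm s t = k" "a s * b t \<noteq> 0"
      unfolding composable_def by auto
    then have st: "p = (s, t)" "sr s = rg t" "cm s t = k" "a s \<noteq> 0" "b t \<noteq> 0" by auto
    then have "cm s t \<in> H" using Hm a b by blast
    then show False using st k by simp
  qed
  then show ?thesis by (simp only: conv_def sum.empty)
qed

lemma point:
  fixes m n :: "'g \<Rightarrow> 'a::idom"
  assumes gr: "group \<Gamma>" and cc: "continuous_cocycle G \<Gamma> c" and gc: "g \<in> carrier \<Gamma>"
    and N: "(m, n) \<in> normalisers G"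
    and gm: "supp m \<subseteq> {\<eta> \<in> Ar. c \<eta> = g}" and gn: "supp n \<subseteq> {\<eta> \<in> Ar. c \<eta> = inv\<^bsub>\<Gamma>\<^esub> g}"
    and x: "x \<in> U0"
    and TU: "group_ring_trivial_units TYPE('a) G x {\<eta> \<in> isotropy G x. c \<eta> = \<one>\<^bsub>\<Gamma>\<^esub>}"
    and a0: "\<alpha>0 \<in> supp m" "sr \<alpha>0 = x"
  shows "(\<forall>\<alpha>\<in>supp m. sr \<alpha> = x \<longrightarrow> rg \<alpha> = rg \<alpha>0 \<longrightarrow> \<alpha> = \<alpha>0) \<and> m \<alpha>0 * n (iv \<alpha>0) = 1"
proof -
  define H where "H = {\<eta> \<in> isotropy G x. c \<eta> = \<one>\<^bsub>\<Gamma>\<^esub>}"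
  have ms: "m \<in> steinberg G" "n \<in> steinberg G" using norm_st[OF N] by blast+
  have suppm: "\<And>\<alpha>. \<alpha> \<in> supp m \<Longrightarrow> \<alpha> \<in> Ar \<and> c \<alpha> = g \<and> m \<alpha> \<noteq> 0"
  proof -
    fix \<alpha> assume a: "\<alpha> \<in> supp m"
    have "\<alpha> \<in> {\<eta> \<in> Ar. c \<eta> = g}" by (rule subsetD[OF gm a])
    then show "\<alpha> \<in> Ar \<and> c \<alpha> = g \<and> m \<alpha> \<noteq> 0" using a by (simp add: supp_iff)
  qed
  have suppn: "\<And>\<alpha>. \<alpha> \<in> supp n \<Longrightarrow> \<alpha> \<in> Ar \<and> c \<alpha> = inv\<^bsub>\<Gamma>\<^esub> g \<and> n \<alpha> \<noteq> 0"
  proof -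
    fix \<alpha> assume a: "\<alpha> \<in> supp n"
    have "\<alpha> \<in> {\<eta> \<in> Ar. c \<eta> = inv\<^bsub>\<Gamma>\<^esub> g}" by (rule subsetD[OF gn a])
    then show "\<alpha> \<in> Ar \<and> c \<alpha> = inv\<^bsub>\<Gamma>\<^esub> g \<and> n \<alpha> \<noteq> 0" using a by (simp add: supp_iff)
  qed
  have a0a: "\<alpha>0 \<in> Ar" "c \<alpha>0 = g" "m \<alpha>0 \<noteq> 0" using suppm[OF a0(1)] by auto
  define w where "w = rg \<alpha>0"
  have wU: "w \<in> U0" unfolding w_def using a0a by simp
  have xa: "x \<in> Ar" "rg x = x" "sr x = x" using x units_iff unit_sr by auto
  have Hiff: "\<And>h. h \<in> H \<longleftrightarrow> h \<in> Ar \<and> sr h = x \<and> rg h = x \<and> c h = \<one>\<^bsub>\<Gamma>\<^esub>"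
    unfolding H_def isotropy_def by auto
  have one: "\<one>\<^bsub>\<Gamma>\<^esub> \<in> carrier \<Gamma>" using group.is_monoid[OF gr] monoid.one_closed by blast
  have ginv: "inv\<^bsub>\<Gamma>\<^esub> g \<in> carrier \<Gamma>" using group.inv_closed[OF gr gc] .
  have xH: "x \<in> H" using Hiff xa coc_unit[OF gr cc x] by simp
  have Hmul: "cm h1 h2 \<in> H" if "h1 \<in> H" "h2 \<in> H" "sr h1 = rg h2" for h1 h2
  proof -
    have h: "h1 \<in> Ar" "sr h1 = x" "rg h1 = x" "c h1 = \<one>\<^bsub>\<Gamma>\<^esub>" "h2 \<in> Ar" "sr h2 = x" "rg h2 = x" "c h2 = \<one>\<^bsub>\<Gamma>\<^esub>"
      using that Hiff by auto
    have "c (cm h1 h2) = \<one>\<^bsub>\<Gamma>\<^esub> \<otimes>\<^bsub>\<Gamma>\<^esub> \<one>\<^bsub>\<Gamma>\<^esub>" using coc_mul[OF cc h(1) h(5)] h by simp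
    also have "\<dots> = \<one>\<^bsub>\<Gamma>\<^esub>" using monoid.l_one[OF group.is_monoid[OF gr] one] .
    finally show ?thesis using Hiff cm_props[of h1 h2] h by simp
  qed
  have Hiv: "cm (iv h) k \<in> H" if "h \<in> H" "k \<in> H" for h k
  proof -
    have h: "h \<in> Ar" "sr h = x" "rg h = x" "c h = \<one>\<^bsub>\<Gamma>\<^esub>" using that Hiff by auto
    have "c (iv h) = \<one>\<^bsub>\<Gamma>\<^esub>" using coc_inv[OF gr cc h(1)] h(4) monoid.inv_one[OF group.is_monoid[OF gr]] by simp
    then have "iv h \<in> H" using Hiff h by simp
    then show ?thesis using Hmul that h Hiff by simp
  qed
  define p where "p h = (if h \<in> H then m (cm \<alpha>0 h) else 0)" for h
  define q where "q h = (if h \<in> H then n (cm h (iv \<alpha>0)) else 0)" for h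
  define Fr where "Fr = {\<alpha> \<in> supp m. rg \<alpha> = w}"
  define Frn where "Frn = {\<beta> \<in> supp n. rg \<beta> = x}"
  have fFr: "finite Fr" unfolding Fr_def by (rule fin_r[OF ms(1)])
  have fFrn: "finite Frn" unfolding Frn_def by (rule fin_r[OF ms(2)])
  obtain V where V: "openin UT V" "compactin UT V" "x \<in> V" "\<forall>\<alpha>\<in>Fr. sr \<alpha> \<in> V \<longleftrightarrow> sr \<alpha> = x"
    using sepV[OF ms(1) x, of w] unfolding Fr_def by blast
  obtain W where W: "openin UT W" "compactin UT W" "w \<in> W" "\<forall>\<beta>\<in>Frn. sr \<beta> \<in> W \<longleftrightarrow> sr \<beta> = w"
    using sepV[OF ms(2) wU, of x] unfolding Frn_def by blast
  have lamm: "(\<Sum>\<alpha>\<in>Fr. m \<alpha> * indicator V (sr \<alpha>) * n (iv \<alpha>)) = 1"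
    using lam[OF N a0(1) V(1,2)] V(4) a0(2) unfolding Fr_def w_def by blast
  obtain \<alpha>1 where a1: "\<alpha>1 \<in> Fr" "m \<alpha>1 * indicator V (sr \<alpha>1) * n (iv \<alpha>1) \<noteq> 0"
  proof -
    have "\<not> (\<forall>\<alpha>\<in>Fr. m \<alpha> * indicator V (sr \<alpha>) * n (iv \<alpha>) = 0)"
    proof
      assume "\<forall>\<alpha>\<in>Fr. m \<alpha> * indicator V (sr \<alpha>) * n (iv \<alpha>) = 0"
      then have "(\<Sum>\<alpha>\<in>Fr. m \<alpha> * indicator V (sr \<alpha>) * n (iv \<alpha>)) = 0" by (rule sum.neutral)
      then show False using lamm by simp
    qed
    then show ?thesis using that by blast
  qed
  have a1p: "\<alpha>1 \<in> Ar" "rg \<alpha>1 = w" "sr \<alpha>1 = x" "n (iv \<alpha>1) \<noteq> 0"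
  proof -
    show "\<alpha>1 \<in> Ar" "rg \<alpha>1 = w" using a1(1) suppm unfolding Fr_def by auto
    have "indicator V (sr \<alpha>1) \<noteq> (0::'a)" using a1(2) by auto
    then have "sr \<alpha>1 \<in> V" by (auto simp: indicator_def split: if_splits)
    then show "sr \<alpha>1 = x" using V(4) a1(1) by blast
    show "n (iv \<alpha>1) \<noteq> 0" using a1(2) by auto
  qed
  define \<beta>0 where "\<beta>0 = iv \<alpha>1"
  have b0: "\<beta>0 \<in> supp n" "rg \<beta>0 = x" "sr \<beta>0 = w"
    unfolding \<beta>0_def using a1p by (auto simp: supp_iff)
  have lamn: "(\<Sum>\<beta>\<in>Frn. n \<beta> * indicator W (sr \<beta>) * m (iv \<beta>)) = 1"
    using lam[OF norm_sym[OF N] b0(1) W(1,2)] W(4) b0(2,3) unfolding Frn_def by blast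
  have pH: "\<And>h. p h \<noteq> 0 \<Longrightarrow> h \<in> H" unfolding p_def by (auto split: if_splits)
  have qH: "\<And>h. q h \<noteq> 0 \<Longrightarrow> h \<in> H" unfolding q_def by (auto split: if_splits)
  have fp: "finite {h. p h \<noteq> 0}"
  proof (rule finite_subset[OF _ finite_imageI[OF fFr, of "\<lambda>\<alpha>. cm (iv \<alpha>0) \<alpha>"]])
    show "{h. p h \<noteq> 0} \<subseteq> (\<lambda>\<alpha>. cm (iv \<alpha>0) \<alpha>) ` Fr"
    proof
      fix h assume "h \<in> {h. p h \<noteq> 0}"
      then have h: "h \<in> H" "m (cm \<alpha>0 h) \<noteq> 0" using pH unfolding p_def by (auto split: if_splits)
      have ha: "h \<in> Ar" "rg h = x" using h(1) Hiff by auto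
      have "cm \<alpha>0 h \<in> Fr" unfolding Fr_def w_def using h(2) cm_props(3)[of \<alpha>0 h] ha a0a a0(2)
        by (simp add: supp_iff)
      moreover have "cm (iv \<alpha>0) (cm \<alpha>0 h) = h" by (rule L1) (use ha a0a a0(2) in simp_all)
      ultimately show "h \<in> (\<lambda>\<alpha>. cm (iv \<alpha>0) \<alpha>) ` Fr" by (metis rev_image_eqI)
    qed
  qed
  have fq: "finite {h. q h \<noteq> 0}"
  proof (rule finite_subset[OF _ finite_imageI[OF fin_s[OF ms(2), of w], of "\<lambda>\<beta>. cm \<beta> \<alpha>0"]])
    show "{h. q h \<noteq> 0} \<subseteq> (\<lambda>\<beta>. cm \<beta> \<alpha>0) ` {\<beta> \<in> supp n. sr \<beta> = w}"
    proof
      fix h assume "h \<in> {h. q h \<noteq> 0}"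
      then have h: "h \<in> H" "n (cm h (iv \<alpha>0)) \<noteq> 0" using qH unfolding q_def by (auto split: if_splits)
      have ha: "h \<in> Ar" "sr h = x" using h(1) Hiff by auto
      have "cm h (iv \<alpha>0) \<in> {\<beta> \<in> supp n. sr \<beta> = w}" unfolding w_def
        using h(2) cm_props(2)[of h "iv \<alpha>0"] ha a0a a0(2) by (simp add: supp_iff)
      moreover have "cm (cm h (iv \<alpha>0)) (iv (iv \<alpha>0)) = h" by (rule L2) (use ha a0a a0(2) in simp_all)
      then have "h = cm (cm h (iv \<alpha>0)) \<alpha>0" using iv_iv[OF a0a(1)] by simp
      ultimately show "h \<in> (\<lambda>\<beta>. cm \<beta> \<alpha>0) ` {\<beta> \<in> supp n. sr \<beta> = w}" by (rule rev_image_eqI)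
    qed
  qed
  have pgr: "p \<in> group_ring H" unfolding group_ring_def supp_def using fp pH by auto
  have qgr: "q \<in> group_ring H" unfolding group_ring_def supp_def using fq qH by auto
  have key_pq: "conv G p q k = (\<Sum>\<alpha>\<in>Fr. m \<alpha> * indicator V (sr \<alpha>) * n (cm (iv \<alpha>) (cm \<alpha>0 (cm k (iv \<alpha>0)))))"
    if k: "k \<in> H" for k
  proof -
    have ka: "k \<in> Ar" "sr k = x" "rg k = x" using k Hiff by auto
    let ?S = "{h. p h \<noteq> 0}"
    let ?S2 = "{\<alpha> \<in> Fr. sr \<alpha> = x}"
    let ?\<eta> = "cm \<alpha>0 (cm k (iv \<alpha>0))"
    let ?F = "\<lambda>\<alpha>. m \<alpha> * n (cm (iv \<alpha>) ?\<eta>)"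
    have SH: "\<And>h. h \<in> ?S \<Longrightarrow> h \<in> H \<and> h \<in> Ar \<and> sr h = x \<and> rg h = x \<and> m (cm \<alpha>0 h) \<noteq> 0"
    proof -
      fix h assume "h \<in> ?S"
      then have ph: "p h \<noteq> 0" by simp
      then have hH: "h \<in> H" by (rule pH)
      then have "m (cm \<alpha>0 h) \<noteq> 0" using ph unfolding p_def by simp
      then show "h \<in> H \<and> h \<in> Ar \<and> sr h = x \<and> rg h = x \<and> m (cm \<alpha>0 h) \<noteq> 0"
        using hH Hiff[of h] by simp
    qed
    have "conv G p q k = (\<Sum>h\<in>?S. p h * q (cm (iv h) k))"
    proof (rule conv_r[OF ka(1) fp])
      show "?S \<subseteq> {\<alpha> \<in> Ar. rg \<alpha> = rg k}" using SH ka by auto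
    qed auto
    also have "\<dots> = (\<Sum>h\<in>?S. ?F (cm \<alpha>0 h))"
    proof (rule sum.cong[OF refl])
      fix h assume h: "h \<in> ?S"
      note hh = SH[OF h]
      have "cm (iv h) k \<in> H" using Hiv hh k by blast
      then have "q (cm (iv h) k) = n (cm (cm (iv h) k) (iv \<alpha>0))" unfolding q_def by simp
      also have "\<dots> = n (cm (iv (cm \<alpha>0 h)) ?\<eta>)"
        using id1[of h k \<alpha>0 x] hh ka a0a a0(2) by simp
      finally show "p h * q (cm (iv h) k) = ?F (cm \<alpha>0 h)" using hh unfolding p_def by simp
    qed
    also have "\<dots> = (\<Sum>\<alpha>\<in>?S2. ?F \<alpha>)"
    proof (rule sum.reindex_bij_betw)
      show "bij_betw (cm \<alpha>0) ?S ?S2"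
      proof (rule bij_betwI')
        fix h1 h2 assume "h1 \<in> ?S" "h2 \<in> ?S"
        then have h: "h1 \<in> Ar" "rg h1 = x" "h2 \<in> Ar" "rg h2 = x" using SH by auto
        show "(cm \<alpha>0 h1 = cm \<alpha>0 h2) = (h1 = h2)"
        proof
          assume e: "cm \<alpha>0 h1 = cm \<alpha>0 h2"
          have "h1 = cm (iv \<alpha>0) (cm \<alpha>0 h1)" by (rule L1[symmetric]) (use h a0a a0(2) in simp_all)
          also have "\<dots> = cm (iv \<alpha>0) (cm \<alpha>0 h2)" using e by simp
          also have "\<dots> = h2" by (rule L1) (use h a0a a0(2) in simp_all)
          finally show "h1 = h2" .
        qed simp
      next
        fix h assume h: "h \<in> ?S"
        note hh = SH[OF h]
        show "cm \<alpha>0 h \<in> ?S2" unfolding Fr_def w_def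
          using hh cm_props[of \<alpha>0 h] a0a a0(2) by (simp add: supp_iff)
      next
        fix \<alpha> assume a: "\<alpha> \<in> ?S2"
        then have aa: "\<alpha> \<in> Ar" "c \<alpha> = g" "m \<alpha> \<noteq> 0" "rg \<alpha> = w" "sr \<alpha> = x"
          using suppm unfolding Fr_def by auto
        let ?h = "cm (iv \<alpha>0) \<alpha>"
        have hp: "?h \<in> Ar" "sr ?h = x" "rg ?h = x" using cm_props[of "iv \<alpha>0" \<alpha>] aa a0a a0(2) w_def by auto
        have "c ?h = inv\<^bsub>\<Gamma>\<^esub> g \<otimes>\<^bsub>\<Gamma>\<^esub> g"
          using coc_mul[OF cc, of "iv \<alpha>0" \<alpha>] coc_inv[OF gr cc a0a(1)] aa a0a w_def by simp
        also have "\<dots> = \<one>\<^bsub>\<Gamma>\<^esub>" using group.l_inv[OF gr gc] .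
        finally have hH: "?h \<in> H" using Hiff hp by simp
        have e: "cm \<alpha>0 ?h = \<alpha>" by (rule L3) (use aa a0a w_def in simp_all)
        then have "p ?h \<noteq> 0" using hH aa unfolding p_def by simp
        then show "\<exists>h\<in>?S. \<alpha> = cm \<alpha>0 h" using e by force
      qed
    qed
    also have "\<dots> = (\<Sum>\<alpha>\<in>Fr. m \<alpha> * indicator V (sr \<alpha>) * n (cm (iv \<alpha>) ?\<eta>))"
    proof (rule sum.mono_neutral_cong_right[symmetric])
      show "finite Fr" by (rule fFr)
      show "?S2 \<subseteq> Fr" by blast
      show "\<forall>i\<in>Fr - ?S2. m i * indicator V (sr i) * n (cm (iv i) ?\<eta>) = 0"
        using V(4) by (auto simp: indicator_def)
      show "\<And>\<alpha>. \<alpha> \<in> ?S2 \<Longrightarrow> m \<alpha> * indicator V (sr \<alpha>) * n (cm (iv \<alpha>) ?\<eta>) = ?F \<alpha>"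
        using V(3) by (auto simp: indicator_def)
    qed
    finally show ?thesis .
  qed
  have pq: "conv G p q = indicator {x}"
  proof
    fix k
    show "conv G p q k = indicator {x} k"
    proof (cases "k \<in> H")
      case False
      have "conv G p q k = 0" using conv_H[of H p q k] Hmul pH qH False by blast
      moreover have "k \<noteq> x" using False xH by blast
      ultimately show ?thesis by simp
    next
      case True
      have ka: "k \<in> Ar" "sr k = x" "rg k = x" using True Hiff by auto
      show ?thesis
      proof (cases "k = x")
        case True
        have e: "cm \<alpha>0 (cm x (iv \<alpha>0)) = w"
        proof -
          have "cm x (iv \<alpha>0) = iv \<alpha>0" using unit_l[of "iv \<alpha>0"] a0a a0(2) by simp
          then show ?thesis using a0a w_def by simp
        qed
        have "conv G p q k = (\<Sum>\<alpha>\<in>Fr. m \<alpha> * indicator V (sr \<alpha>) * n (cm (iv \<alpha>) (cm \<alpha>0 (cm k (iv \<alpha>0)))))"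
          by (rule key_pq[OF \<open>k \<in> H\<close>])
        also have "\<dots> = (\<Sum>\<alpha>\<in>Fr. m \<alpha> * indicator V (sr \<alpha>) * n (iv \<alpha>))"
          unfolding True e
        proof (rule sum.cong[OF refl])
          fix \<alpha> assume "\<alpha> \<in> Fr"
          then have aa: "\<alpha> \<in> Ar" "rg \<alpha> = w" using suppm unfolding Fr_def by auto
          have "cm (iv \<alpha>) w = iv \<alpha>" using unit_r[of "iv \<alpha>"] aa by simp
          then show "m \<alpha> * indicator V (sr \<alpha>) * n (cm (iv \<alpha>) w) = m \<alpha> * indicator V (sr \<alpha>) * n (iv \<alpha>)"
            by simp
        qed
        finally show ?thesis using lamm True by simp
      next
        case False
        let ?\<eta> = "cm \<alpha>0 (cm k (iv \<alpha>0))"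
        have ki: "cm k (iv \<alpha>0) \<in> Ar" "rg (cm k (iv \<alpha>0)) = x" using cm_props[of k "iv \<alpha>0"] ka a0a a0(2) by auto
        have e: "?\<eta> \<in> Ar" "rg ?\<eta> = w" using cm_props[of \<alpha>0 "cm k (iv \<alpha>0)"] ki a0a a0(2) w_def by auto
        have nu: "?\<eta> \<notin> U0"
        proof
          assume "?\<eta> \<in> U0"
          then have "?\<eta> = w" using e units_iff by auto
          have "cm k (iv \<alpha>0) = cm (iv \<alpha>0) ?\<eta>" by (rule L1[symmetric]) (use ki a0a a0(2) in simp_all)
          also have "\<dots> = iv \<alpha>0" using \<open>?\<eta> = w\<close> unit_r[of "iv \<alpha>0"] a0a w_def by simp
          finally have "cm k (iv \<alpha>0) = iv \<alpha>0" .
          then have "cm (cm k (iv \<alpha>0)) (iv (iv \<alpha>0)) = cm (iv \<alpha>0) \<alpha>0" using a0a by simp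
          moreover have "cm (cm k (iv \<alpha>0)) (iv (iv \<alpha>0)) = k" by (rule L2) (use ka a0a a0(2) in simp_all)
          ultimately have "k = x" using a0a a0(2) by simp
          then show False using False by simp
        qed
        have "conv G p q k = 0"
          unfolding key_pq[OF \<open>k \<in> H\<close>] using normA[OF N V(1,2) e(1) nu] e(2) unfolding Fr_def by simp
        then show ?thesis using False by simp
      qed
    qed
  qed
  have key_qp: "conv G q p k = (\<Sum>\<beta>\<in>Frn. n \<beta> * indicator W (sr \<beta>) * m (cm (iv \<beta>) k))"
    if k: "k \<in> H" for k
  proof -
    have ka: "k \<in> Ar" "sr k = x" "rg k = x" using k Hiff by auto
    let ?S = "{h. q h \<noteq> 0}"
    let ?S2 = "{\<beta> \<in> Frn. sr \<beta> = w}"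
    let ?F = "\<lambda>\<beta>. n \<beta> * m (cm (iv \<beta>) k)"
    have SH: "\<And>h. h \<in> ?S \<Longrightarrow> h \<in> H \<and> h \<in> Ar \<and> sr h = x \<and> rg h = x \<and> n (cm h (iv \<alpha>0)) \<noteq> 0"
    proof -
      fix h assume "h \<in> ?S"
      then have ph: "q h \<noteq> 0" by simp
      then have hH: "h \<in> H" by (rule qH)
      then have "n (cm h (iv \<alpha>0)) \<noteq> 0" using ph unfolding q_def by simp
      then show "h \<in> H \<and> h \<in> Ar \<and> sr h = x \<and> rg h = x \<and> n (cm h (iv \<alpha>0)) \<noteq> 0"
        using hH Hiff[of h] by simp
    qed
    have "conv G q p k = (\<Sum>h\<in>?S. q h * p (cm (iv h) k))"
    proof (rule conv_r[OF ka(1) fq])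
      show "?S \<subseteq> {\<alpha> \<in> Ar. rg \<alpha> = rg k}" using SH ka by auto
    qed auto
    also have "\<dots> = (\<Sum>h\<in>?S. ?F (cm h (iv \<alpha>0)))"
    proof (rule sum.cong[OF refl])
      fix h assume h: "h \<in> ?S"
      note hh = SH[OF h]
      have "cm (iv h) k \<in> H" using Hiv hh k by blast
      then have "p (cm (iv h) k) = m (cm \<alpha>0 (cm (iv h) k))" unfolding p_def by simp
      also have "\<dots> = m (cm (iv (cm h (iv \<alpha>0))) k)"
        using id2[of h k \<alpha>0 x] hh ka a0a a0(2) by simp
      finally show "q h * p (cm (iv h) k) = ?F (cm h (iv \<alpha>0))" using hh unfolding q_def by simp
    qed
    also have "\<dots> = (\<Sum>\<beta>\<in>?S2. ?F \<beta>)"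
    proof (rule sum.reindex_bij_betw)
      show "bij_betw (\<lambda>h. cm h (iv \<alpha>0)) ?S ?S2"
      proof (rule bij_betwI')
        fix h1 h2 assume "h1 \<in> ?S" "h2 \<in> ?S"
        then have h: "h1 \<in> Ar" "sr h1 = x" "h2 \<in> Ar" "sr h2 = x" using SH by auto
        show "(cm h1 (iv \<alpha>0) = cm h2 (iv \<alpha>0)) = (h1 = h2)"
        proof
          assume e: "cm h1 (iv \<alpha>0) = cm h2 (iv \<alpha>0)"
          have "h1 = cm (cm h1 (iv \<alpha>0)) (iv (iv \<alpha>0))" by (rule L2[symmetric]) (use h a0a a0(2) in simp_all)
          also have "\<dots> = cm (cm h2 (iv \<alpha>0)) (iv (iv \<alpha>0))" using e by simp
          also have "\<dots> = h2" by (rule L2) (use h a0a a0(2) in simp_all)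
          finally show "h1 = h2" .
        qed simp
      next
        fix h assume h: "h \<in> ?S"
        note hh = SH[OF h]
        show "cm h (iv \<alpha>0) \<in> ?S2" unfolding Frn_def w_def
          using hh cm_props[of h "iv \<alpha>0"] a0a a0(2) by (simp add: supp_iff)
      next
        fix \<beta> assume b: "\<beta> \<in> ?S2"
        then have bb: "\<beta> \<in> Ar" "c \<beta> = inv\<^bsub>\<Gamma>\<^esub> g" "n \<beta> \<noteq> 0" "rg \<beta> = x" "sr \<beta> = w"
          using suppn unfolding Frn_def by auto
        let ?h = "cm \<beta> \<alpha>0"
        have hp: "?h \<in> Ar" "sr ?h = x" "rg ?h = x" using cm_props[of \<beta> \<alpha>0] bb a0a a0(2) w_def by auto
        have "c ?h = inv\<^bsub>\<Gamma>\<^esub> g \<otimes>\<^bsub>\<Gamma>\<^esub> g"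
          using coc_mul[OF cc, of \<beta> \<alpha>0] bb a0a w_def by simp
        also have "\<dots> = \<one>\<^bsub>\<Gamma>\<^esub>" using group.l_inv[OF gr gc] .
        finally have hH: "?h \<in> H" using Hiff hp by simp
        have e: "cm ?h (iv \<alpha>0) = \<beta>" by (rule L2) (use bb a0a w_def in simp_all)
        then have "q ?h \<noteq> 0" using hH bb unfolding q_def by simp
        then show "\<exists>h\<in>?S. \<beta> = cm h (iv \<alpha>0)" using e by force
      qed
    qed
    also have "\<dots> = (\<Sum>\<beta>\<in>Frn. n \<beta> * indicator W (sr \<beta>) * m (cm (iv \<beta>) k))"
    proof (rule sum.mono_neutral_cong_right[symmetric])
      show "finite Frn" by (rule fFrn)
      show "?S2 \<subseteq> Frn" by blast
      show "\<forall>i\<in>Frn - ?S2. n i * indicator W (sr i) * m (cm (iv i) k) = 0"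
        using W(4) by (auto simp: indicator_def)
      show "\<And>\<beta>. \<beta> \<in> ?S2 \<Longrightarrow> n \<beta> * indicator W (sr \<beta>) * m (cm (iv \<beta>) k) = ?F \<beta>"
        using W(3) by (auto simp: indicator_def)
    qed
    finally show ?thesis .
  qed
  have qp: "conv G q p = indicator {x}"
  proof
    fix k
    show "conv G q p k = indicator {x} k"
    proof (cases "k \<in> H")
      case False
      have "conv G q p k = 0" using conv_H[of H q p k] Hmul pH qH False by blast
      moreover have "k \<noteq> x" using False xH by blast
      ultimately show ?thesis by simp
    next
      case True
      have ka: "k \<in> Ar" "sr k = x" "rg k = x" using True Hiff by auto
      show ?thesis
      proof (cases "k = x")
        case True
        have "conv G q p k = (\<Sum>\<beta>\<in>Frn. n \<beta> * indicator W (sr \<beta>) * m (cm (iv \<beta>) k))"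
          by (rule key_qp[OF \<open>k \<in> H\<close>])
        also have "\<dots> = (\<Sum>\<beta>\<in>Frn. n \<beta> * indicator W (sr \<beta>) * m (iv \<beta>))"
          unfolding True
        proof (rule sum.cong[OF refl])
          fix \<beta> assume "\<beta> \<in> Frn"
          then have bb: "\<beta> \<in> Ar" "rg \<beta> = x" using suppn unfolding Frn_def by auto
          have "cm (iv \<beta>) x = iv \<beta>" using unit_r[of "iv \<beta>"] bb by simp
          then show "n \<beta> * indicator W (sr \<beta>) * m (cm (iv \<beta>) x) = n \<beta> * indicator W (sr \<beta>) * m (iv \<beta>)"
            by simp
        qed
        finally show ?thesis using lamn True by simp
      next
        case False
        have nu: "k \<notin> U0"
        proof
          assume "k \<in> U0"
          then have "k = rg k" using units_iff by auto
          then show False using False ka by simp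
        qed
        have "conv G q p k = 0"
          unfolding key_qp[OF \<open>k \<in> H\<close>] using normA[OF norm_sym[OF N] W(1,2) ka(1) nu] ka(3)
          unfolding Frn_def by simp
        then show ?thesis using False by simp
      qed
    qed
  qed
  obtain u h0 where h0: "h0 \<in> H" "p = (\<lambda>\<eta>. if \<eta> = h0 then u else 0)"
  proof -
    have "\<exists>b\<in>group_ring H. conv G p b = indicator {x} \<and> conv G b p = indicator {x}"
      using qgr pq qp by blast
    then have "\<exists>u::'a. \<exists>h\<in>H. p = (\<lambda>\<eta>. if \<eta> = h then u else 0)"
      using TU pgr unfolding group_ring_trivial_units_def H_def by blast
    then show ?thesis using that by blast
  qed
  have "p x = m \<alpha>0" unfolding p_def using xH a0a a0(2) unit_r[of \<alpha>0] by simp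
  then have "p x \<noteq> 0" using a0a by simp
  then have xh0: "x = h0" using h0(2) by (auto split: if_splits)
  have uniq: "\<forall>\<alpha>\<in>supp m. sr \<alpha> = x \<longrightarrow> rg \<alpha> = rg \<alpha>0 \<longrightarrow> \<alpha> = \<alpha>0"
  proof (intro ballI impI)
    fix \<alpha> assume a: "\<alpha> \<in> supp m" "sr \<alpha> = x" "rg \<alpha> = rg \<alpha>0"
    then have aa: "\<alpha> \<in> Ar" "c \<alpha> = g" "m \<alpha> \<noteq> 0" using suppm by auto
    let ?h = "cm (iv \<alpha>0) \<alpha>"
    have hp: "?h \<in> Ar" "sr ?h = x" "rg ?h = x" using cm_props[of "iv \<alpha>0" \<alpha>] a aa a0a a0(2) by auto
    have "c ?h = inv\<^bsub>\<Gamma>\<^esub> g \<otimes>\<^bsub>\<Gamma>\<^esub> g"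
      using coc_mul[OF cc, of "iv \<alpha>0" \<alpha>] coc_inv[OF gr cc a0a(1)] a aa a0a by simp
    also have "\<dots> = \<one>\<^bsub>\<Gamma>\<^esub>" using group.l_inv[OF gr gc] .
    finally have hH: "?h \<in> H" using Hiff hp by simp
    have e: "cm \<alpha>0 ?h = \<alpha>" by (rule L3) (use a aa a0a in simp_all)
    then have "p ?h \<noteq> 0" using hH aa unfolding p_def by simp
    then have "?h = x" using h0(2) xh0 by (auto split: if_splits)
    then have "\<alpha> = cm \<alpha>0 x" using e by simp
    then show "\<alpha> = \<alpha>0" using unit_r[of \<alpha>0] a0a a0(2) by simp
  qed
  have "1 = (\<Sum>\<alpha>\<in>Fr. m \<alpha> * indicator V (sr \<alpha>) * n (iv \<alpha>))" using lamm by simp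
  also have "\<dots> = m \<alpha>0 * indicator V (sr \<alpha>0) * n (iv \<alpha>0) +
      (\<Sum>\<alpha>\<in>Fr - {\<alpha>0}. m \<alpha> * indicator V (sr \<alpha>) * n (iv \<alpha>))"
  proof (rule sum.remove[OF fFr])
    show "\<alpha>0 \<in> Fr" unfolding Fr_def w_def using a0 by simp
  qed
  also have "(\<Sum>\<alpha>\<in>Fr - {\<alpha>0}. m \<alpha> * indicator V (sr \<alpha>) * n (iv \<alpha>)) = 0"
  proof (rule sum.neutral, rule ballI)
    fix \<alpha> assume a: "\<alpha> \<in> Fr - {\<alpha>0}"
    then have "sr \<alpha> \<noteq> x" using uniq unfolding Fr_def w_def by auto
    then have "sr \<alpha> \<notin> V" using V(4) a by blast
    then show "m \<alpha> * indicator V (sr \<alpha>) * n (iv \<alpha>) = 0" by simp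
  qed
  finally have "m \<alpha>0 * n (iv \<alpha>0) = 1" using V(3) a0(2) by simp
  then show ?thesis using uniq by blast
qed

end

context AG begin

lemma homeo_restrict:
  assumes lh: "local_homeomorphism TG UT f" and B: "openin TG B" "inj_on f B"
  shows "openin UT (f ` B) \<and> homeomorphic_map (subtopology TG B) (subtopology UT (f ` B)) f"
proof
  show fo: "openin UT (f ` B)" using lh_open_image[OF lh B(1)] .
  have BT: "B \<subseteq> topspace TG" using B(1) openin_subset by blast
  have fBU: "f ` B \<subseteq> topspace UT" using fo openin_subset by blast
  show "homeomorphic_map (subtopology TG B) (subtopology UT (f ` B)) f"
  proof (rule bijective_open_imp_homeomorphic_map)
    show "continuous_map (subtopology TG B) (subtopology UT (f ` B)) f"
      using continuous_map_into_subtopology[OF continuous_map_from_subtopology[OF lh_continuous[OF lh]]]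
      using BT by auto
    show "open_map (subtopology TG B) (subtopology UT (f ` B)) f"
      unfolding open_map_def
    proof (intro allI impI)
      fix U assume "openin (subtopology TG B) U"
      then have U: "openin TG U" "U \<subseteq> B"
        using B(1) openin_trans_full openin_imp_subset by (blast, metis)
      then have "openin UT (f ` U)" using lh_open_image[OF lh] by blast
      moreover have "f ` U = f ` U \<inter> f ` B" using U(2) by blast
      ultimately show "openin (subtopology UT (f ` B)) (f ` U)" unfolding openin_subtopology by blast
    qed
    show "f ` topspace (subtopology TG B) = topspace (subtopology UT (f ` B))" using BT fBU by auto
    show "inj_on f (topspace (subtopology TG B))" using B(2) BT by (simp add: Int_absorb1)
  qed
qed

lemma bisection_of:
  assumes "openin TG B" "inj_on rg B" "inj_on sr B"
  shows "bisection G B"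
  unfolding bisection_def
  using homeo_restrict[OF lh_r assms(1,2)] homeo_restrict[OF lh_s assms(1,3)] assms(1)
    openin_subset Ar_top by metis

lemma point2:
  fixes m n :: "'g \<Rightarrow> 'a::idom"
  assumes gr: "group \<Gamma>" and cc: "continuous_cocycle G \<Gamma> c" and gc: "g \<in> carrier \<Gamma>"
    and N: "(m, n) \<in> normalisers G"
    and gm: "supp m \<subseteq> {\<eta> \<in> Ar. c \<eta> = g}" and gn: "supp n \<subseteq> {\<eta> \<in> Ar. c \<eta> = inv\<^bsub>\<Gamma>\<^esub> g}"
    and x: "x \<in> U0"
    and TU: "group_ring_trivial_units TYPE('a) G x {\<eta> \<in> isotropy G x. c \<eta> = \<one>\<^bsub>\<Gamma>\<^esub>}"
    and a1: "\<alpha>1 \<in> supp m" "sr \<alpha>1 = x" and a2: "\<alpha>2 \<in> supp m" "sr \<alpha>2 = x"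
  shows "\<alpha>1 = \<alpha>2 \<and> m \<alpha>1 * n (iv \<alpha>1) = 1"
proof -
  note P1 = point[OF gr cc gc N gm gn x TU a1]
  note P2 = point[OF gr cc gc N gm gn x TU a2]
  have ms: "m \<in> steinberg G" "n \<in> steinberg G" using norm_st[OF N] by blast+
  have aa: "\<alpha>1 \<in> Ar" "\<alpha>2 \<in> Ar" "m \<alpha>2 \<noteq> 0" using a1 a2 supp_sub[OF ms(1)] by (auto simp: supp_iff)
  have "\<alpha>1 = \<alpha>2"
  proof (rule ccontr)
    assume ne: "\<alpha>1 \<noteq> \<alpha>2"
    then have rne: "rg \<alpha>1 \<noteq> rg \<alpha>2" using P2 a1 by blast
    let ?\<eta> = "cm \<alpha>2 (iv \<alpha>1)"
    have e: "?\<eta> \<in> Ar" "rg ?\<eta> = rg \<alpha>2" "sr ?\<eta> = rg \<alpha>1"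
      using cm_props[of \<alpha>2 "iv \<alpha>1"] aa a1(2) a2(2) by auto
    have nu: "?\<eta> \<notin> U0" using e rne units_iff unit_sr by metis
    obtain V where V: "openin UT V" "compactin UT V" "x \<in> V"
        "\<forall>\<alpha>\<in>{\<alpha> \<in> supp m. rg \<alpha> = rg \<alpha>2}. sr \<alpha> \<in> V \<longleftrightarrow> sr \<alpha> = x"
      using sepV[OF ms(1) x, of "rg \<alpha>2"] by blast
    define Fr where "Fr = {\<alpha> \<in> supp m. rg \<alpha> = rg \<alpha>2}"
    have fFr: "finite Fr" unfolding Fr_def by (rule fin_r[OF ms(1)])
    have "0 = (\<Sum>\<alpha>\<in>Fr. m \<alpha> * indicator V (sr \<alpha>) * n (cm (iv \<alpha>) ?\<eta>))"
      using normA[OF N V(1,2) e(1) nu] e(2) unfolding Fr_def by simp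
    also have "\<dots> = m \<alpha>2 * indicator V (sr \<alpha>2) * n (cm (iv \<alpha>2) ?\<eta>) +
      (\<Sum>\<alpha>\<in>Fr - {\<alpha>2}. m \<alpha> * indicator V (sr \<alpha>) * n (cm (iv \<alpha>) ?\<eta>))"
    proof (rule sum.remove[OF fFr])
      show "\<alpha>2 \<in> Fr" unfolding Fr_def using a2 by simp
    qed
    also have "(\<Sum>\<alpha>\<in>Fr - {\<alpha>2}. m \<alpha> * indicator V (sr \<alpha>) * n (cm (iv \<alpha>) ?\<eta>)) = 0"
    proof (rule sum.neutral, rule ballI)
      fix \<alpha> assume a: "\<alpha> \<in> Fr - {\<alpha>2}"
      then have "sr \<alpha> \<noteq> x" using P2 a2 unfolding Fr_def by auto
      then have "sr \<alpha> \<notin> V" using V(4) a unfolding Fr_def by blast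
      then show "m \<alpha> * indicator V (sr \<alpha>) * n (cm (iv \<alpha>) ?\<eta>) = 0" by simp
    qed
    also have "cm (iv \<alpha>2) ?\<eta> = iv \<alpha>1" by (rule L1) (use aa a1(2) a2(2) in simp_all)
    finally have "m \<alpha>2 * n (iv \<alpha>1) = 0" using V(3) a2(2) by simp
    moreover have "n (iv \<alpha>1) \<noteq> 0" using P1 by auto
    ultimately show False using aa(3) by simp
  qed
  then show ?thesis using P1 by blast
qed

end

context AG begin

lemma core:
  fixes m n :: "'g \<Rightarrow> 'a::idom"
  assumes gr: "group \<Gamma>" and cc: "continuous_cocycle G \<Gamma> c" and gc: "g \<in> carrier \<Gamma>"
    and N: "(m, n) \<in> normalisers G"
    and gm: "supp m \<subseteq> {\<eta> \<in> Ar. c \<eta> = g}" and gn: "supp n \<subseteq> {\<eta> \<in> Ar. c \<eta> = inv\<^bsub>\<Gamma>\<^esub> g}"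
    and X: "X \<subseteq> U0" "UT closure_of X = U0"
      "\<forall>x\<in>X. group_ring_trivial_units TYPE('a) G x {\<eta> \<in> isotropy G x. c \<eta> = \<one>\<^bsub>\<Gamma>\<^esub>}"
  shows "(\<forall>\<alpha>\<in>supp m. m \<alpha> * n (iv \<alpha>) = 1) \<and> inj_on sr (supp m)"
proof -
  have ms: "m \<in> steinberg G" "n \<in> steinberg G" using norm_st[OF N] by blast+
  have dense: "\<exists>x\<in>X. x \<in> Ob" if Ob: "openin UT Ob" "y \<in> Ob" for Ob y
  proof -
    have "y \<in> UT closure_of X" using X(2) Ob openin_subset topspace_UT by blast
    then show ?thesis using Ob unfolding in_closure_of by blast
  qed
  have pt: "\<alpha>1 = \<alpha>2 \<and> m \<alpha>1 * n (iv \<alpha>1) = 1"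
    if "x \<in> X" "\<alpha>1 \<in> supp m" "sr \<alpha>1 = x" "\<alpha>2 \<in> supp m" "sr \<alpha>2 = x" for x \<alpha>1 \<alpha>2
  proof -
    have "x \<in> U0" using that X(1) by blast
    moreover have "group_ring_trivial_units TYPE('a) G x {\<eta> \<in> isotropy G x. c \<eta> = \<one>\<^bsub>\<Gamma>\<^esub>}"
      using X(3) that(1) by blast
    ultimately show ?thesis using point2[OF gr cc gc N gm gn] that by blast
  qed
  have so: "openin TG (supp m)" using supp_open[OF ms(1)] .
  have P1: "m \<alpha> * n (iv \<alpha>) = 1" if a: "\<alpha> \<in> supp m" for \<alpha>
  proof -
    have aa: "\<alpha> \<in> Ar" using a supp_sub[OF ms(1)] by blast
    obtain U1 where U1: "openin TG U1" "\<alpha> \<in> U1" "\<forall>\<xi>\<in>U1. m \<xi> = m \<alpha>" using st_loc[OF ms(1) aa] by blast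
    obtain U2 where U2: "openin TG U2" "iv \<alpha> \<in> U2" "\<forall>\<xi>\<in>U2. n \<xi> = n (iv \<alpha>)"
      using st_loc[OF ms(2)] aa by (meson closed(3))
    define U3 where "U3 = {\<gamma> \<in> topspace TG. iv \<gamma> \<in> U2}"
    have U3: "openin TG U3" unfolding U3_def using openin_continuous_map_preimage[OF inv_cont U2(1)] .
    define U where "U = U1 \<inter> U3 \<inter> supp m"
    have Uo: "openin TG U" unfolding U_def using U1(1) U3 so by blast
    have aU: "\<alpha> \<in> U" unfolding U_def U3_def using U1(2) U2(2) a aa Ar_top by blast
    have "openin UT (sr ` U)" using lh_open_image[OF lh_s Uo] .
    then obtain x where x: "x \<in> X" "x \<in> sr ` U" using dense aU by blast
    then obtain \<gamma> where g: "\<gamma> \<in> U" "sr \<gamma> = x" by blast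
    have "\<gamma> \<in> supp m" "m \<gamma> = m \<alpha>" "n (iv \<gamma>) = n (iv \<alpha>)" using g(1) U1(3) U2(3) unfolding U_def U3_def by auto
    then show ?thesis using pt[OF x(1) _ g(2) _ g(2)] by metis
  qed
  have P2: "inj_on sr (supp m)"
  proof (rule inj_onI, rule ccontr)
    fix \<alpha>1 \<alpha>2 assume a: "\<alpha>1 \<in> supp m" "\<alpha>2 \<in> supp m" "sr \<alpha>1 = sr \<alpha>2" "\<alpha>1 \<noteq> \<alpha>2"
    have aa: "\<alpha>1 \<in> topspace TG" "\<alpha>2 \<in> topspace TG" using a supp_sub[OF ms(1)] Ar_top by auto
    obtain U1 U2 where U: "openin TG U1" "openin TG U2" "\<alpha>1 \<in> U1" "\<alpha>2 \<in> U2" "disjnt U1 U2"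
      using haus aa a(4) unfolding Hausdorff_space_def by blast
    have o1: "openin TG (U1 \<inter> supp m)" "openin TG (U2 \<inter> supp m)" using U so by blast+
    have "openin UT (sr ` (U1 \<inter> supp m) \<inter> sr ` (U2 \<inter> supp m))"
      using lh_open_image[OF lh_s o1(1)] lh_open_image[OF lh_s o1(2)] by blast
    moreover have "sr \<alpha>1 \<in> sr ` (U1 \<inter> supp m) \<inter> sr ` (U2 \<inter> supp m)"
    proof
      show "sr \<alpha>1 \<in> sr ` (U1 \<inter> supp m)" using a(1) U(3) by blast
      show "sr \<alpha>1 \<in> sr ` (U2 \<inter> supp m)" by (rule rev_image_eqI[of \<alpha>2]) (use a(2,3) U(4) in auto)
    qed
    ultimately obtain x where x: "x \<in> X" "x \<in> sr ` (U1 \<inter> supp m) \<inter> sr ` (U2 \<inter> supp m)"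
      using dense by blast
    obtain \<gamma>1 where g1: "\<gamma>1 \<in> U1" "\<gamma>1 \<in> supp m" "sr \<gamma>1 = x" using x(2) by auto
    obtain \<gamma>2 where g2: "\<gamma>2 \<in> U2" "\<gamma>2 \<in> supp m" "sr \<gamma>2 = x" using x(2) by auto
    note g = g1 g2
    have "\<gamma>1 = \<gamma>2" using pt[OF x(1) g(2,3) g(5,6)] by blast
    then show False using g U(5) by (auto simp: disjnt_def)
  qed
  show ?thesis using P1 P2 by blast
qed

lemma conv_formula:
  fixes m n :: "'g \<Rightarrow> 'a::idom"
  assumes ms: "m \<in> steinberg G" "n \<in> steinberg G"
    and sn: "supp n = iv ` supp m" and isr: "inj_on sr (supp m)" and ir: "inj_on rg (supp m)"
    and P: "\<forall>\<alpha>\<in>supp m. m \<alpha> * n (iv \<alpha>) = 1"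
  shows "conv G m n = indicator (sr ` supp n)"
proof
  fix \<eta>
  have snr: "sr ` supp n = rg ` supp m"
  proof -
    have "sr ` supp n = (\<lambda>\<alpha>. sr (iv \<alpha>)) ` supp m" unfolding sn by (simp add: image_image)
    also have "\<dots> = rg ` supp m" using supp_sub[OF ms(1)] by (intro image_cong) auto
    finally show ?thesis .
  qed
  show "conv G m n \<eta> = indicator (sr ` supp n) \<eta>"
  proof (cases "\<eta> \<in> Ar")
    case False
    have "\<eta> \<notin> sr ` supp n" using False supp_sub[OF ms(2)] by auto
    then show ?thesis using conv_out[OF False] by simp
  next
    case True
    define S where "S = {\<alpha> \<in> supp m. rg \<alpha> = rg \<eta>}"
    have c: "conv G m n \<eta> = (\<Sum>\<alpha>\<in>S. m \<alpha> * n (cm (iv \<alpha>) \<eta>))"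
    proof (rule conv_r[OF True])
      show "finite S" unfolding S_def by (rule fin_r[OF ms(1)])
      show "S \<subseteq> {\<alpha> \<in> Ar. rg \<alpha> = rg \<eta>}" unfolding S_def using supp_sub[OF ms(1)] by blast
    qed (auto simp: S_def supp_iff)
    show ?thesis
    proof (cases "\<eta> \<in> rg ` supp m")
      case True
      then obtain \<alpha>0 where a0: "\<alpha>0 \<in> supp m" "\<eta> = rg \<alpha>0" by blast
      have a0a: "\<alpha>0 \<in> Ar" using a0 supp_sub[OF ms(1)] by blast
      have "S = {\<alpha>0}"
      proof
        show "{\<alpha>0} \<subseteq> S" unfolding S_def using a0 a0a by simp
        show "S \<subseteq> {\<alpha>0}"
        proof
          fix \<alpha> assume "\<alpha> \<in> S"
          then have "\<alpha> \<in> supp m" "rg \<alpha> = rg \<alpha>0" unfolding S_def using a0 a0a by auto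
          then have "\<alpha> = \<alpha>0" using inj_onD[OF ir _ _ a0(1)] by blast
          then show "\<alpha> \<in> {\<alpha>0}" by simp
        qed
      qed
      then have "conv G m n \<eta> = m \<alpha>0 * n (cm (iv \<alpha>0) (rg \<alpha>0))" using c a0 by simp
      also have "cm (iv \<alpha>0) (rg \<alpha>0) = iv \<alpha>0" using unit_r[of "iv \<alpha>0"] a0a by simp
      finally show ?thesis using P a0 snr True by simp
    next
      case False
      have "m \<alpha> * n (cm (iv \<alpha>) \<eta>) = 0" if a: "\<alpha> \<in> S" for \<alpha>
      proof (rule ccontr)
        assume "m \<alpha> * n (cm (iv \<alpha>) \<eta>) \<noteq> 0"
        then have "cm (iv \<alpha>) \<eta> \<in> supp n" by (simp add: supp_iff)
        then obtain \<gamma> where g: "\<gamma> \<in> supp m" "cm (iv \<alpha>) \<eta> = iv \<gamma>" using sn by blast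
        have aa: "\<alpha> \<in> supp m" "\<alpha> \<in> Ar" "rg \<alpha> = rg \<eta>" using a supp_sub[OF ms(1)] unfolding S_def by auto
        have ga: "\<gamma> \<in> Ar" using g supp_sub[OF ms(1)] by blast
        have "rg (cm (iv \<alpha>) \<eta>) = sr \<alpha>" using cm_props(3)[of "iv \<alpha>" \<eta>] aa True by simp
        then have "sr \<alpha> = sr \<gamma>" using g(2) ga by simp
        then have "\<alpha> = \<gamma>" using isr aa(1) g(1) unfolding inj_on_def by blast
        then have "cm (iv \<alpha>) \<eta> = iv \<alpha>" using g(2) by simp
        then have "cm \<alpha> (cm (iv \<alpha>) \<eta>) = rg \<alpha>" using aa by simp
        moreover have "cm \<alpha> (cm (iv \<alpha>) \<eta>) = \<eta>" by (rule L3) (use aa True in simp_all)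
        ultimately have "\<eta> \<in> rg ` supp m" using aa by auto
        then show False using False by simp
      qed
      then have "conv G m n \<eta> = 0" using c by (simp add: sum.neutral)
      then show ?thesis using False snr by simp
    qed
  qed
qed

end

theorem mainTheorem3:
  fixes G :: "'g top_groupoid"
    and \<Gamma> :: "('c, 'm) monoid_scheme"
    and c :: "'g \<Rightarrow> 'c"
    and g :: 'c
    and m n :: "'g \<Rightarrow> 'a::idom"
  assumes "group \<Gamma>"
    and "class_C TYPE('a) \<Gamma> G c"
    and "g \<in> carrier \<Gamma>"
    and "(m, n) \<in> graded_normalisers G \<Gamma> c g"
  shows "(conv G m n = indicator (gsrc G ` supp n)
       \<and> conv G n m = indicator (gsrc G ` supp m))
     \<and> (compactin (gtop G) (supp m) \<and> openin (gtop G) (supp m) \<and> bisection G (supp m)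
       \<and> supp m \<subseteq> {\<eta> \<in> arrows G. c \<eta> = g})
     \<and> supp n = ginv G ` supp m"
proof -
  note gr = assms(1) and gc = assms(3)
  have ahg: "ample_hausdorff_groupoid G" and cc: "continuous_cocycle G \<Gamma> c"
    using assms(2) unfolding class_C_def by blast+
  obtain X where X: "X \<subseteq> units G" "unit_top G closure_of X = units G"
      "\<forall>x\<in>X. group_ring_trivial_units TYPE('a) G x {\<eta> \<in> isotropy G x. c \<eta> = \<one>\<^bsub>\<Gamma>\<^esub>}"
    using assms(2) unfolding class_C_def by blast
  interpret AG G by (rule AG.intro[OF ahg])
  have N: "(m, n) \<in> normalisers G" using assms(4) unfolding graded_normalisers_def by blast
  have gm: "supp m \<subseteq> {\<eta> \<in> Ar. c \<eta> = g}" and gn: "supp n \<subseteq> {\<eta> \<in> Ar. c \<eta> = inv\<^bsub>\<Gamma>\<^esub> g}"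
    using assms(4) unfolding graded_normalisers_def graded_part_def by blast+
  have ginv: "inv\<^bsub>\<Gamma>\<^esub> g \<in> carrier \<Gamma>" using group.inv_closed[OF gr gc] .
  have gm': "supp m \<subseteq> {\<eta> \<in> Ar. c \<eta> = inv\<^bsub>\<Gamma>\<^esub> (inv\<^bsub>\<Gamma>\<^esub> g)}"
    using gm group.inv_inv[OF gr gc] by simp
  have ms: "m \<in> steinberg G" "n \<in> steinberg G" using norm_st[OF N] by blast+
  have Cm: "(\<forall>\<alpha>\<in>supp m. m \<alpha> * n (iv \<alpha>) = 1) \<and> inj_on sr (supp m)"
    by (rule core[OF gr cc gc N gm gn X])
  have Cn: "(\<forall>\<alpha>\<in>supp n. n \<alpha> * m (iv \<alpha>) = 1) \<and> inj_on sr (supp n)"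
    by (rule core[OF gr cc ginv norm_sym[OF N] gn gm' X])
  have sn: "supp n = iv ` supp m"
  proof
    show "iv ` supp m \<subseteq> supp n"
    proof
      fix \<beta> assume "\<beta> \<in> iv ` supp m"
      then obtain \<alpha> where a: "\<alpha> \<in> supp m" "\<beta> = iv \<alpha>" by blast
      then have "m \<alpha> * n (iv \<alpha>) = 1" using Cm by blast
      then show "\<beta> \<in> supp n" using a by (auto simp: supp_iff)
    qed
    show "supp n \<subseteq> iv ` supp m"
    proof
      fix \<beta> assume b: "\<beta> \<in> supp n"
      then have "n \<beta> * m (iv \<beta>) = 1" using Cn by blast
      then have "iv \<beta> \<in> supp m" by (auto simp: supp_iff)
      moreover have "\<beta> = iv (iv \<beta>)" using b supp_sub[OF ms(2)] by auto
      ultimately show "\<beta> \<in> iv ` supp m" by (rule rev_image_eqI)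
    qed
  qed
  have sm: "supp m = iv ` supp n"
  proof -
    have "iv ` supp n = (\<lambda>\<alpha>. iv (iv \<alpha>)) ` supp m" unfolding sn by (simp add: image_image)
    also have "\<dots> = (\<lambda>\<alpha>. \<alpha>) ` supp m" using supp_sub[OF ms(1)] by (intro image_cong) auto
    also have "\<dots> = supp m" by simp
    finally show ?thesis by simp
  qed
  have irm: "inj_on rg (supp m)"
  proof (rule inj_onI)
    fix a b assume ab: "a \<in> supp m" "b \<in> supp m" "rg a = rg b"
    have aa: "a \<in> Ar" "b \<in> Ar" using ab supp_sub[OF ms(1)] by auto
    have "iv a \<in> supp n" "iv b \<in> supp n" using ab sn by auto
    moreover have "sr (iv a) = sr (iv b)" using ab aa by simp
    ultimately have "iv a = iv b" using Cn unfolding inj_on_def by blast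
    then show "a = b" using aa by (metis iv_iv)
  qed
  have irn: "inj_on rg (supp n)"
  proof (rule inj_onI)
    fix a b assume ab: "a \<in> supp n" "b \<in> supp n" "rg a = rg b"
    have aa: "a \<in> Ar" "b \<in> Ar" using ab supp_sub[OF ms(2)] by auto
    have "iv a \<in> supp m" "iv b \<in> supp m" using ab sm by auto
    moreover have "sr (iv a) = sr (iv b)" using ab aa by simp
    ultimately have "iv a = iv b" using Cm unfolding inj_on_def by blast
    then show "a = b" using aa by (metis iv_iv)
  qed
  have c1: "conv G m n = indicator (gsrc G ` supp n)"
    by (rule conv_formula[OF ms sn conjunct2[OF Cm] irm conjunct1[OF Cm]])
  have c2: "conv G n m = indicator (gsrc G ` supp m)"
    by (rule conv_formula[OF ms(2,1) sm conjunct2[OF Cn] irn conjunct1[OF Cn]])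
  have bis: "bisection G (supp m)"
    by (rule bisection_of[OF supp_open[OF ms(1)] irm conjunct2[OF Cm]])
  show ?thesis using c1 c2 bis supp_compact[OF ms(1)] supp_open[OF ms(1)] gm sn by blast
qed

end
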